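(* Let $\mathcal{H}(T,A,\mu)$ be a Cauchy--de Branges space with $A$ of finite order. Then an entire function $f$ belongs to $\mathcal{H}(T,A,\mu)$ if and only if the following three conditions hold: (i) $\sum_n\dfrac{|f(t_n)|^2}{|A'(t_n)|^2\mu_n}<\infty$; (ii) there exist a set $E\subset(0,\infty)$ of zero linear density and $N>0$ such that $|f(z)|\le|z|^N|A(z)|$ for all $z$ with $|z|\notin E$ (and $|z|$ sufficiently large); (iii) there exists a set $\Omega\subset\mathbb{C}$ of positive upper area density, i.e. $\limsup_{R\to\infty}R^{-2}m_2(\Omega\cap D(0,R))>0$, such that $|f(z)|=o(|A(z)|)$ as $|z|\to\infty$, $z\in\Omega$. Moreover, for $f\in\mathcal{H}(T,A,\mu)$, $\|f\|^2=\sum_n\frac{|f(t_n)|^2}{|A'(t_n)|^2\mu_n}$.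
   Context: $T=\{t_n\}\subset\mathbb{C}$ pairwise distinct, $0\notin T$, $|t_n|\to\infty$. $A$ is an entire function with simple zeros whose zero set is exactly $T$; $\mu_n>0$ with $\sum_n\mu_n/(|t_n|^2+1)<\infty$; $\mathcal{H}(T,A,\mu)=\{f(z)=A(z)\sum_n\frac{a_n\mu_n^{1/2}}{z-t_n}: a\in\ell^2\}$ with $\|f\|=\|a\|_{\ell^2}$. A set $E\subset(0,\infty)$ has zero linear density if $|E\cap(0,R)|=o(R)$, $R\to\infty$. $m_2$ is planar Lebesgue measure, $D(0,R)$ the disc of radius $R$ about $0$. *)

theory Defs
  imports "HOL-Analysis.Analysis"
begin

text \<open>Standing assumptions on the data (T, A, mu) of a Cauchy--de Branges space.
  T is enumerated by an injective sequence t.\<close>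
definition cdb_data :: "(nat \<Rightarrow> complex) \<Rightarrow> (complex \<Rightarrow> complex) \<Rightarrow> (nat \<Rightarrow> real) \<Rightarrow> bool" where
  "cdb_data t A \<mu> \<longleftrightarrow>
     inj t \<and> (\<forall>n. t n \<noteq> 0) \<and> filterlim (\<lambda>n. norm (t n)) at_top sequentially \<and>
     A holomorphic_on UNIV \<and> {z. A z = 0} = range t \<and> (\<forall>n. deriv A (t n) \<noteq> 0) \<and>
     (\<forall>n. \<mu> n > 0) \<and> summable (\<lambda>n. \<mu> n / ((norm (t n))\<^sup>2 + 1))"

text \<open>a in l^2 represents f: f(z) = A(z) * sum_n a_n mu_n^(1/2) / (z - t_n) (for z not in T;
  f is entire so this determines f).\<close>
definition cdb_repr :: "(nat \<Rightarrow> complex) \<Rightarrow> (complex \<Rightarrow> complex) \<Rightarrow> (nat \<Rightarrow> real)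
    \<Rightarrow> (nat \<Rightarrow> complex) \<Rightarrow> (complex \<Rightarrow> complex) \<Rightarrow> bool" where
  "cdb_repr t A \<mu> a f \<longleftrightarrow>
     summable (\<lambda>n. (norm (a n))\<^sup>2) \<and>
     (\<forall>z. z \<notin> range t \<longrightarrow>
        summable (\<lambda>n. a n * complex_of_real (sqrt (\<mu> n)) / (z - t n)) \<and>
        f z = A z * (\<Sum>n. a n * complex_of_real (sqrt (\<mu> n)) / (z - t n)))"

definition cdb_space :: "(nat \<Rightarrow> complex) \<Rightarrow> (complex \<Rightarrow> complex) \<Rightarrow> (nat \<Rightarrow> real)
    \<Rightarrow> (complex \<Rightarrow> complex) set" where
  "cdb_space t A \<mu> = {f. f holomorphic_on UNIV \<and> (\<exists>a. cdb_repr t A \<mu> a f)}"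

definition finite_order :: "(complex \<Rightarrow> complex) \<Rightarrow> bool" where
  "finite_order A \<longleftrightarrow> (\<exists>\<rho>::real. \<exists>R. \<forall>z. norm z > R \<longrightarrow> norm (A z) \<le> exp (norm z powr \<rho>))"

definition zero_linear_density :: "real set \<Rightarrow> bool" where
  "zero_linear_density E \<longleftrightarrow> E \<in> sets lebesgue \<and>
     ((\<lambda>R. measure lebesgue (E \<inter> {0<..<R}) / R) \<longlongrightarrow> 0) at_top"

definition pos_upper_area_density :: "complex set \<Rightarrow> bool" where
  "pos_upper_area_density \<Omega> \<longleftrightarrow> \<Omega> \<in> sets lebesgue \<and>
     Limsup at_top (\<lambda>R::real. ereal (measure lebesgue (\<Omega> \<inter> ball 0 R) / R\<^sup>2)) > 0"

end

theory Submission
  imports Defs "HOL-Complex_Analysis.Complex_Analysis" "HOL-Computational_Algebra.Fundamental_Theorem_Algebra"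
begin
locale cdb =
  fixes t :: "nat \<Rightarrow> complex" and A :: "complex \<Rightarrow> complex" and \<mu> :: "nat \<Rightarrow> real"
  assumes data: "cdb_data t A \<mu>"
begin

lemma inj_t: "inj t" using data by (simp add: cdb_data_def)
lemma t_nz: "t n \<noteq> 0" using data by (simp add: cdb_data_def)
lemma t_lim: "filterlim (\<lambda>n. norm (t n)) at_top sequentially" using data by (simp add: cdb_data_def)
lemma A_hol: "A holomorphic_on UNIV" using data by (simp add: cdb_data_def)
lemma A_zero_iff: "A z = 0 \<longleftrightarrow> z \<in> range t"
proof -
  have "{z. A z = 0} = range t" using data by (simp add: cdb_data_def)
  then show ?thesis by blast
qed
lemma A_t: "A (t n) = 0" using A_zero_iff by auto
lemma A0: "A 0 \<noteq> 0" using A_zero_iff t_nz by (metis imageE)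
lemma dA_nz: "deriv A (t n) \<noteq> 0" using data by (simp add: cdb_data_def)
lemma mu_pos: "\<mu> n > 0" using data by (simp add: cdb_data_def)

definition w :: "nat \<Rightarrow> real" where "w n = \<mu> n / ((norm (t n))\<^sup>2 + 1)"
lemma w_summable: "summable w" using data unfolding w_def[abs_def] by (simp add: cdb_data_def)
lemma w_pos: "w n > 0" using mu_pos[of n] unfolding w_def by (intro divide_pos_pos) (auto intro: add_nonneg_pos)
lemma mu_eq: "\<mu> n = w n * ((norm (t n))\<^sup>2 + 1)"
proof -
  have "(norm (t n))\<^sup>2 + 1 > 0" by (simp add: add_nonneg_pos)
  then show ?thesis unfolding w_def by simp
qed

lemma fin_small: "finite {n. norm (t n) \<le> r}"
proof -
  have "\<forall>\<^sub>F n in sequentially. norm (t n) > r"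
    using t_lim by (simp add: filterlim_at_top_dense)
  then obtain N where "\<And>n. n \<ge> N \<Longrightarrow> norm (t n) > r" by (auto simp: eventually_sequentially)
  then have "{n. norm (t n) \<le> r} \<subseteq> {..<N}" by (force simp: not_le)
  then show ?thesis by (rule finite_subset) auto
qed

lemma dist_pos:
  assumes "\<And>n. n \<in> J \<Longrightarrow> t n \<noteq> z"
  shows "\<exists>d>0. \<forall>n\<in>J. d \<le> norm (z - t n)"
proof -
  define F where "F = {n\<in>J. norm (t n) \<le> norm z + 1}"
  have fF: "finite F" unfolding F_def by (rule finite_subset[OF _ fin_small]) auto
  define d where "d = Min (insert 1 ((\<lambda>n. norm (z - t n)) ` F))"
  have d_pos: "d > 0" unfolding d_def using fF assms by (subst Min_gr_iff) (auto simp: F_def)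
  have "d \<le> norm (z - t n)" if "n \<in> J" for n
  proof (cases "n \<in> F")
    case True then show ?thesis unfolding d_def using fF by (intro Min_le) auto
  next
    case False
    then have "norm (t n) > norm z + 1" using that by (auto simp: F_def)
    moreover have "norm (t n) \<le> norm z + norm (z - t n)" using norm_triangle_ineq2[of "t n" z] by (simp add: norm_minus_commute)
    moreover have "d \<le> 1" unfolding d_def using fF by (intro Min_le) auto
    ultimately show ?thesis by linarith
  qed
  then show ?thesis using d_pos by blast
qed

lemma ratio_bound:
  assumes "d > 0" "d \<le> norm (z - t n)" "norm z \<le> \<rho>"
  shows "\<mu> n / (norm (z - t n))\<^sup>2 \<le> w n * (2 + (2*\<rho>\<^sup>2 + 1) / d\<^sup>2)"
proof -
  define u where "u = norm (z - t n)"
  have u: "u \<ge> d" "u > 0" using assms by (auto simp: u_def)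
  have "norm (t n) \<le> norm z + u" unfolding u_def using norm_triangle_ineq2[of "t n" z] by (simp add: norm_minus_commute)
  then have "norm (t n) \<le> \<rho> + u" using assms(3) by linarith
  then have "(norm (t n))\<^sup>2 \<le> (\<rho> + u)\<^sup>2" by (intro power_mono) auto
  also have "\<dots> \<le> 2*\<rho>\<^sup>2 + 2*u\<^sup>2"
  proof -
    have "0 \<le> (\<rho> - u)\<^sup>2" by simp
    then show ?thesis by (simp add: power2_eq_square algebra_simps)
  qed
  finally have s: "(norm (t n))\<^sup>2 + 1 \<le> 2*u\<^sup>2 + (2*\<rho>\<^sup>2+1)" by linarith
  have "(2*\<rho>\<^sup>2+1) \<le> u\<^sup>2 * ((2*\<rho>\<^sup>2+1) / d\<^sup>2)"
  proof -
    have "d\<^sup>2 \<le> u\<^sup>2" using u assms(1) by (intro power_mono) auto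
    then have "1 \<le> u\<^sup>2 / d\<^sup>2" using assms(1) by simp
    then have "(2*\<rho>\<^sup>2+1) * 1 \<le> (2*\<rho>\<^sup>2+1) * (u\<^sup>2 / d\<^sup>2)"
      by (intro mult_left_mono) (auto simp: add_nonneg_pos)
    then show ?thesis by (simp add: mult.commute)
  qed
  with s have le: "(norm (t n))\<^sup>2 + 1 \<le> u\<^sup>2 * (2 + (2*\<rho>\<^sup>2 + 1) / d\<^sup>2)" by (simp add: algebra_simps)
  have "\<mu> n \<le> w n * (u\<^sup>2 * (2 + (2*\<rho>\<^sup>2 + 1) / d\<^sup>2))"
    unfolding mu_eq[of n] using w_pos[of n] le by (intro mult_left_mono) auto
  then have "\<mu> n / u\<^sup>2 \<le> w n * (u\<^sup>2 * (2 + (2*\<rho>\<^sup>2 + 1) / d\<^sup>2)) / u\<^sup>2"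
    using u by (intro divide_right_mono) auto
  also have "\<dots> = w n * (2 + (2*\<rho>\<^sup>2 + 1) / d\<^sup>2)" using u by simp
  finally show ?thesis by (simp add: u_def)
qed

definition trm :: "(nat \<Rightarrow> complex) \<Rightarrow> nat \<Rightarrow> complex \<Rightarrow> complex" where
  "trm a n z = a n * complex_of_real (sqrt (\<mu> n)) / (z - t n)"

definition S :: "(nat \<Rightarrow> complex) \<Rightarrow> complex \<Rightarrow> complex" where
  "S a z = (\<Sum>n. trm a n z)"

lemma norm_trm: "norm (trm a n z) = norm (a n) * sqrt (\<mu> n) / norm (z - t n)"
  unfolding trm_def using mu_pos[of n] by (simp add: norm_mult norm_divide)

lemma trm_bound: "norm (trm a n z) \<le> ((norm (a n))\<^sup>2 + \<mu> n / (norm (z - t n))\<^sup>2) / 2"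
proof -
  define x where "x = norm (a n)"
  define y where "y = sqrt (\<mu> n) / norm (z - t n)"
  have "norm (trm a n z) = x * y" unfolding norm_trm x_def y_def by simp
  also have "\<dots> \<le> (x\<^sup>2 + y\<^sup>2) / 2" using zero_le_square[of "x - y"] by (simp add: power2_eq_square algebra_simps)
  also have "y\<^sup>2 = \<mu> n / (norm (z - t n))\<^sup>2" unfolding y_def using mu_pos[of n]
    by (simp add: power_divide)
  finally show ?thesis by (simp add: x_def)
qed

end

context cdb
begin

lemma trm_zero: "a n = 0 \<Longrightarrow> trm a n = (\<lambda>z. 0)"
  by (auto simp: trm_def)

lemma local_bound:
  assumes J: "\<And>n. n \<notin> J \<Longrightarrow> a n = 0" and z0: "z0 \<notin> t ` J"
  obtains d K where "d > 0" "K \<ge> 0" "ball z0 d \<inter> t ` J = {}"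
    "\<And>y n. y \<in> ball z0 d \<Longrightarrow> norm (trm a n y) \<le> ((norm (a n))\<^sup>2 + w n * K) / 2"
proof -
  obtain d where d: "d > 0" "\<forall>n\<in>J. d \<le> norm (z0 - t n)"
    using dist_pos[of J z0] z0 by blast
  define \<rho> where "\<rho> = norm z0 + d"
  define K where "K = 2 + (2*\<rho>\<^sup>2 + 1) / (d/2)\<^sup>2"
  have K: "K \<ge> 0" unfolding K_def by (intro add_nonneg_nonneg divide_nonneg_nonneg) auto
  have dist: "d/2 \<le> norm (y - t n)" if "y \<in> ball z0 (d/2)" "n \<in> J" for y n
  proof -
    have "norm (z0 - t n) \<le> norm (z0 - y) + norm (y - t n)" by (rule norm_diff_triangle_le) auto
    moreover have "norm (z0 - y) < d/2" using that by (simp add: dist_norm)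
    ultimately show ?thesis using d that by fastforce
  qed
  show ?thesis
  proof (rule that[of "d/2" K])
    show "0 < d/2" using d by simp
    show "0 \<le> K" by (rule K)
    show "ball z0 (d / 2) \<inter> t ` J = {}"
      using dist d by fastforce
    fix y n assume y: "y \<in> ball z0 (d/2)"
    show "norm (trm a n y) \<le> ((norm (a n))\<^sup>2 + w n * K) / 2"
    proof (cases "n \<in> J")
      case False
      then show ?thesis using J[of n] w_pos[of n] K by (simp add: trm_def)
    next
      case True
      have ny: "norm y \<le> \<rho>"
      proof -
        have "norm y \<le> norm z0 + norm (y - z0)" using norm_triangle_ineq2[of y z0] by simp
        moreover have "norm (y - z0) < d" using y d by (simp add: dist_norm norm_minus_commute)
        ultimately show ?thesis unfolding \<rho>_def by simp
      qed
      have 1: "\<mu> n / (norm (y - t n))\<^sup>2 \<le> w n * K"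
        unfolding K_def using ratio_bound[of "d/2" y n \<rho>] dist[OF y True] d ny by simp
      have 2: "((norm (a n))\<^sup>2 + \<mu> n / (norm (y - t n))\<^sup>2) / 2 \<le> ((norm (a n))\<^sup>2 + w n * K) / 2"
        using 1 by (intro divide_right_mono add_left_mono) auto
      show ?thesis using order_trans[OF trm_bound[of a n y] 2] .
    qed
  qed
qed

lemma S_props:
  assumes l2: "summable (\<lambda>n. (norm (a n))\<^sup>2)" and J: "\<And>n. n \<notin> J \<Longrightarrow> a n = 0"
  shows "open (- (t ` J))"
    and "\<And>z. z \<notin> t ` J \<Longrightarrow> summable (\<lambda>n. norm (trm a n z))"
    and "\<And>z. z \<notin> t ` J \<Longrightarrow> summable (\<lambda>n. trm a n z)"
    and "S a holomorphic_on (- (t ` J))"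
proof -
  show op: "open (- (t ` J))"
  proof (rule openI)
    fix z assume "z \<in> - t ` J"
    then have "z \<notin> t ` J" by simp
    then obtain d where d: "d > 0" "\<forall>n\<in>J. d \<le> norm (z - t n)"
      using dist_pos[of J z] by blast
    have "ball z d \<subseteq> - t ` J"
    proof
      fix y assume "y \<in> ball z d"
      then have "norm (z - y) < d" by (simp add: dist_norm)
      then show "y \<in> - t ` J" using d by auto
    qed
    then show "\<exists>e>0. ball z e \<subseteq> - t ` J" using d by blast
  qed
  have sumh: "summable (\<lambda>n. ((norm (a n))\<^sup>2 + w n * K) / 2)" for K :: real
    using l2 w_summable by (intro summable_divide summable_add summable_mult2) auto
  show sn: "summable (\<lambda>n. norm (trm a n z))" if z: "z \<notin> t ` J" for z
  proof -
    obtain d K where "d > 0" "K \<ge> 0" "ball z d \<inter> t ` J = {}"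
      "\<And>y n. y \<in> ball z d \<Longrightarrow> norm (trm a n y) \<le> ((norm (a n))\<^sup>2 + w n * K) / 2"
      using local_bound[where J=J and a=a, OF J z] by blast
    then have "\<And>n. norm (norm (trm a n z)) \<le> ((norm (a n))\<^sup>2 + w n * K) / 2" by auto
    then show ?thesis by (rule summable_comparison_test'[OF sumh[of K]])
  qed
  show "summable (\<lambda>n. trm a n z)" if "z \<notin> t ` J" for z
    using sn[OF that] by (rule summable_norm_cancel)
  define f' where "f' n x = - (a n * complex_of_real (sqrt (\<mu> n))) / (x - t n)\<^sup>2" for n x
  have der: "(trm a n has_field_derivative f' n x) (at x)" if "x \<in> - t ` J" for n x
  proof (cases "n \<in> J")
    case False
    then have "trm a n = (\<lambda>z. 0)" using J[of n] by (simp add: trm_zero)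
    then show ?thesis using J[of n] False by (simp add: f'_def)
  next
    case True
    then have "x \<noteq> t n" using that by auto
    then have "x - t n \<noteq> 0" by simp
    show ?thesis unfolding trm_def[abs_def] f'_def
      using \<open>x \<noteq> t n\<close> by (auto intro!: derivative_eq_intros simp: power2_eq_square)
  qed
  have "\<exists>g g'. \<forall>x \<in> - t ` J. ((\<lambda>n. trm a n x) sums g x) \<and> ((\<lambda>n. f' n x) sums g' x) \<and> (g has_field_derivative g' x) (at x)"
  proof (rule series_and_derivative_comparison_local[OF op der])
    fix x assume "x \<in> - t ` J"
    then have "x \<notin> t ` J" by simp
    then obtain d K where "d > 0" "K \<ge> 0" "ball x d \<inter> t ` J = {}"
      "\<And>y n. y \<in> ball x d \<Longrightarrow> norm (trm a n y) \<le> ((norm (a n))\<^sup>2 + w n * K) / 2"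
      using local_bound[where J=J and a=a, OF J] by blast
    then show "\<exists>d h. 0 < d \<and> summable h \<and> (\<forall>\<^sub>F n in sequentially. \<forall>y\<in>ball x d \<inter> - t ` J. norm (trm a n y) \<le> h n)"
      using sumh by (intro exI[of _ d] exI[of _ "\<lambda>n. ((norm (a n))\<^sup>2 + w n * K) / 2"]) auto
  qed auto
  then obtain g g' where gg: "\<And>x. x \<in> - t ` J \<Longrightarrow> ((\<lambda>n. trm a n x) sums g x) \<and> (g has_field_derivative g' x) (at x)"
    by blast
  have "(S a has_field_derivative g' x) (at x)" if "x \<in> - t ` J" for x
  proof (rule has_field_derivative_transform_within_open[of g _ _ "- t ` J"])
    show "(g has_field_derivative g' x) (at x)" using gg that by blast
  qed (use op that gg in \<open>auto simp: S_def sums_iff\<close>)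
  then show "S a holomorphic_on (- (t ` J))"
    using holomorphic_on_open[OF op] by blast
qed

end

lemma hol_local:
  assumes "\<And>z. \<exists>U. open U \<and> z \<in> U \<and> f holomorphic_on U"
  shows "f holomorphic_on UNIV"
proof -
  have "\<exists>f'. (f has_field_derivative f') (at z)" for z
  proof -
    obtain U where U: "open U" "z \<in> U" "f holomorphic_on U" using assms by blast
    then show ?thesis using holomorphic_on_open[OF U(1)] by blast
  qed
  then show ?thesis using holomorphic_on_open[of UNIV] by auto
qed

context cdb
begin

definition Hf :: "(nat \<Rightarrow> complex) \<Rightarrow> complex \<Rightarrow> complex" where
  "Hf a z = (if z \<in> range t then deriv A z * a (inv t z) * complex_of_real (sqrt (\<mu> (inv t z))) else A z * S a z)"

lemma Hf_t: "Hf a (t m) = deriv A (t m) * a m * complex_of_real (sqrt (\<mu> m))"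
  unfolding Hf_def using inj_t by (simp add: inv_f_f)

lemma Hf_out: "z \<notin> range t \<Longrightarrow> Hf a z = A z * S a z"
  unfolding Hf_def by simp

lemma S_split:
  assumes "summable (\<lambda>n. trm a n z)"
  shows "S a z = trm a m z + S (a(m := 0)) z"
proof -
  have eq: "trm (a(m := 0)) n z = trm a n z - (if n = m then trm a n z else 0)" for n
    by (auto simp: trm_def)
  have "(\<lambda>n. trm (a(m := 0)) n z) sums (S a z - trm a m z)"
    unfolding eq using assms[unfolded summable_sums_iff] sums_single[of m "\<lambda>n. trm a n z"]
    by (intro sums_diff) (auto simp: S_def summable_sums)
  then show ?thesis by (simp add: S_def sums_iff)
qed

lemma Hf_hol:
  assumes l2: "summable (\<lambda>n. (norm (a n))\<^sup>2)"
  shows "Hf a holomorphic_on UNIV"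
proof (rule hol_local)
  fix z
  show "\<exists>U. open U \<and> z \<in> U \<and> Hf a holomorphic_on U"
  proof (cases "z \<in> range t")
    case False
    have "open (- range t)" "S a holomorphic_on (- range t)"
      using S_props[where J=UNIV, OF l2] by auto
    moreover have "(\<lambda>z. A z * S a z) holomorphic_on (- range t)"
      using A_hol calculation(2) by (intro holomorphic_intros) (auto intro: holomorphic_on_subset)
    then have "Hf a holomorphic_on (- range t)"
      by (rule holomorphic_transform) (simp add: Hf_out)
    ultimately show ?thesis using False by blast
  next
    case True
    then obtain m where m: "z = t m" by blast
    define a' where "a' = a(m := 0)"
    have l2': "summable (\<lambda>n. (norm (a' n))\<^sup>2)"
    proof -
      have "(norm (a' n))\<^sup>2 \<le> (norm (a n))\<^sup>2" for n by (simp add: a'_def)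
      then show ?thesis by (intro summable_comparison_test'[OF l2]) auto
    qed
    have J: "\<And>n. n \<notin> - {m} \<Longrightarrow> a' n = 0" by (simp add: a'_def)
    define U where "U = - (t ` (- {m}))"
    have U: "open U" "S a' holomorphic_on U" using S_props[where J="- {m}", OF l2' J] by (auto simp: U_def)
    have zU: "z \<in> U" using inj_t by (auto simp: U_def m inj_eq)
    define q where "q = (\<lambda>z. if z = t m then deriv A (t m) else (A z - A (t m)) / (z - t m))"
    have q: "q holomorphic_on UNIV" unfolding q_def by (rule pole_lemma_open[OF A_hol]) auto
    define c where "c = a m * complex_of_real (sqrt (\<mu> m))"
    have g: "(\<lambda>z. c * q z + A z * S a' z) holomorphic_on U"
      using q A_hol U(2) by (intro holomorphic_intros) (auto intro: holomorphic_on_subset)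
    have eqH: "Hf a y = c * q y + A y * S a' y" if "y \<in> U" for y
    proof (cases "y = t m")
      case True
      then show ?thesis by (simp add: Hf_t q_def c_def A_t)
    next
      case False
      then have y: "y \<notin> range t" using that by (auto simp: U_def)
      have sm: "summable (\<lambda>n. trm a n y)" using S_props(3)[where J=UNIV, OF l2, of y] y by auto
      have "Hf a y = A y * trm a m y + A y * S a' y"
        using Hf_out[OF y] S_split[OF sm, of m] by (simp add: a'_def distrib_left)
      also have "A y * trm a m y = c * q y"
        using False by (simp add: trm_def q_def c_def A_t)
      finally show ?thesis .
    qed
    have "Hf a holomorphic_on U" using g by (rule holomorphic_transform) (simp add: eqH)
    then show ?thesis using U(1) zU by blast
  qed
qed

lemma eq_on_T:
  assumes f: "f holomorphic_on UNIV" and g: "g holomorphic_on UNIV"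
    and eq: "\<And>z. z \<notin> range t \<Longrightarrow> f z = g z"
  shows "f = g"
proof
  fix z
  show "f z = g z"
  proof (cases "z \<in> range t")
    case False then show ?thesis by (rule eq)
  next
    case True
    then obtain m where m: "z = t m" by blast
    have J: "\<And>n. n \<notin> - {m} \<Longrightarrow> (\<lambda>_. 0::complex) n = 0" by simp
    define U where "U = - (t ` (- {m}))"
    have U: "open U" using S_props(1)[where a="\<lambda>_. 0" and J="- {m}"] by (auto simp: U_def)
    have zU: "z \<in> U" using inj_t by (auto simp: U_def m inj_eq)
    have ev: "\<forall>\<^sub>F y in at z. f y = g y"
    proof -
      have "\<forall>\<^sub>F y in at z. y \<in> U" using U zU by (rule eventually_at_in_open')
      moreover have "\<forall>\<^sub>F y in at z. y \<noteq> z" by (rule eventually_neq_at_within)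
      ultimately show ?thesis
      proof eventually_elim
        case (elim y)
        then have "y \<notin> range t" by (auto simp: U_def m)
        then show ?case by (rule eq)
      qed
    qed
    have cf: "isCont f z" using f holomorphic_on_imp_continuous_on continuous_on_eq_continuous_at by blast
    have cg: "isCont g z" using g holomorphic_on_imp_continuous_on continuous_on_eq_continuous_at by blast
    have "(f \<longlongrightarrow> f z) (at z)" using cf by (simp add: isCont_def)
    moreover have "(f \<longlongrightarrow> g z) (at z)"
    proof (rule Lim_transform_eventually)
      show "(g \<longlongrightarrow> g z) (at z)" using cg by (simp add: isCont_def)
      show "\<forall>\<^sub>F y in at z. g y = f y" using ev by (simp add: eq_commute)
    qed
    ultimately show ?thesis by (intro tendsto_unique) auto
  qed
qed

lemma repr_eq_Hf:
  assumes f: "f holomorphic_on UNIV" and r: "cdb_repr t A \<mu> a f"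
  shows "f = Hf a"
proof (rule eq_on_T[OF f])
  show "Hf a holomorphic_on UNIV" using r by (intro Hf_hol) (simp add: cdb_repr_def)
  fix z assume "z \<notin> range t"
  then show "f z = Hf a z" using r by (simp add: cdb_repr_def Hf_out S_def trm_def)
qed

end

context cdb
begin

lemma factor:
  assumes "finite F"
  shows "\<exists>Q. Q holomorphic_on UNIV \<and> (\<forall>z. A z = Q z * (\<Prod>k\<in>F. z - t k))"
  using assms
proof (induction F rule: finite_induct)
  case empty
  then show ?case using A_hol by auto
next
  case (insert k F)
  then obtain Q where Q: "Q holomorphic_on UNIV" "\<And>z. A z = Q z * (\<Prod>k\<in>F. z - t k)" by blast
  have "(\<Prod>j\<in>F. t k - t j) \<noteq> 0"
    using insert(1,2) inj_t by (auto simp: prod_zero_iff inj_eq)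
  moreover have "A (t k) = 0" by (rule A_t)
  ultimately have Qk: "Q (t k) = 0" using Q(2)[of "t k"] by simp
  define Q' where "Q' = (\<lambda>z. if z = t k then deriv Q (t k) else (Q z - Q (t k)) / (z - t k))"
  have Q'h: "Q' holomorphic_on UNIV" unfolding Q'_def by (rule pole_lemma_open[OF Q(1)]) auto
  have "Q z = Q' z * (z - t k)" for z
    by (cases "z = t k") (auto simp: Q'_def Qk)
  then have "A z = Q' z * (\<Prod>j\<in>insert k F. z - t j)" for z
    using Q(2)[of z] insert(1,2) by (simp add: mult_ac)
  then show ?case using Q'h by blast
qed

lemma count_core:
  assumes R0: "\<And>z. norm z > R0 \<Longrightarrow> norm (A z) \<le> exp (norm z powr \<rho>)"
    and r: "r > 0" "4 * r > R0"
  shows "real (card {n. norm (t n) \<le> r}) \<le> (4 * r) powr \<rho> + \<bar>ln (norm (A 0))\<bar>"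
proof -
  define F where "F = {n. norm (t n) \<le> r}"
  define m where "m = card F"
  have fF: "finite F" unfolding F_def by (rule fin_small)
  obtain Q where Q: "Q holomorphic_on UNIV" "\<And>z. A z = Q z * (\<Prod>k\<in>F. z - t k)"
    using factor[OF fF] by blast
  define B where "B = exp ((4*r) powr \<rho>) / (3*r)^m"
  have bd: "norm (Q z) \<le> B" if z: "norm z = 4 * r" for z
  proof -
    have le: "3 * r \<le> norm (z - t k)" if "k \<in> F" for k
    proof -
      have "norm z \<le> norm (z - t k) + norm (t k)" using norm_triangle_ineq[of "z - t k" "t k"] by simp
      then show ?thesis using that z by (simp add: F_def)
    qed
    have "(3*r)^m = (\<Prod>k\<in>F. 3*r)" by (simp add: m_def)
    also have "\<dots> \<le> (\<Prod>k\<in>F. norm (z - t k))"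
      using le r by (intro prod_mono) auto
    also have "\<dots> = norm (\<Prod>k\<in>F. z - t k)" by (simp add: prod_norm)
    finally have P: "(3*r)^m \<le> norm (\<Prod>k\<in>F. z - t k)" .
    have P0: "(3*r)^m > 0" using r by simp
    have "norm (A z) \<le> exp ((4*r) powr \<rho>)" using R0[of z] z r by simp
    then have "norm (Q z) * norm (\<Prod>k\<in>F. z - t k) \<le> exp ((4*r) powr \<rho>)"
      using Q(2)[of z] by (simp add: norm_mult)
    moreover have "norm (Q z) * (3*r)^m \<le> norm (Q z) * norm (\<Prod>k\<in>F. z - t k)"
      using P by (intro mult_left_mono) auto
    ultimately have "norm (Q z) * (3*r)^m \<le> exp ((4*r) powr \<rho>)" by linarith
    then show ?thesis unfolding B_def using P0 by (simp add: pos_le_divide_eq)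
  qed
  have "norm ((deriv ^^ 0) Q 0) \<le> fact 0 * B / (4*r)^0"
  proof (rule Cauchy_inequality)
    show "Q holomorphic_on ball 0 (4 * r)" using Q(1) by (rule holomorphic_on_subset) auto
    show "continuous_on (cball 0 (4 * r)) Q"
      using Q(1) holomorphic_on_imp_continuous_on continuous_on_subset by blast
    show "0 < 4 * r" using r by simp
    show "norm (0 - x) = 4 * r \<Longrightarrow> norm (Q x) \<le> B" for x using bd[of x] by simp
  qed
  then have Q0: "norm (Q 0) \<le> B" by simp
  have "norm (\<Prod>k\<in>F. 0 - t k) = (\<Prod>k\<in>F. norm (0 - t k))" by (rule prod_norm[symmetric])
  also have "\<dots> = (\<Prod>k\<in>F. norm (t k))" by simp
  also have "\<dots> \<le> (\<Prod>k\<in>F. r)" by (intro prod_mono) (auto simp: F_def)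
  also have "\<dots> = r^m" by (simp add: m_def)
  finally have Pn: "norm (\<Prod>k\<in>F. 0 - t k) \<le> r^m" .
  have "norm (A 0) = norm (Q 0) * norm (\<Prod>k\<in>F. 0 - t k)" using Q(2)[of 0] by (simp add: norm_mult)
  also have "\<dots> \<le> B * r^m"
  proof -
    have "B \<ge> 0" unfolding B_def using r by (intro divide_nonneg_pos) auto
    then show ?thesis using Q0 Pn by (intro mult_mono) auto
  qed
  also have "\<dots> = exp ((4*r) powr \<rho>) / 3^m" unfolding B_def using r by (simp add: power_mult_distrib)
  finally have "norm (A 0) * 3^m \<le> exp ((4*r) powr \<rho>)" by (simp add: pos_le_divide_eq)
  then have "ln (norm (A 0) * 3^m) \<le> ln (exp ((4*r) powr \<rho>))"
    using A0 by (subst ln_le_cancel_iff) auto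
  then have "ln (norm (A 0) * 3^m) \<le> (4*r) powr \<rho>" by simp
  then have "ln (norm (A 0)) + m * ln 3 \<le> (4*r) powr \<rho>"
    using A0 by (simp add: ln_mult ln_realpow)
  moreover have "real m * ln 3 \<ge> real m * 1"
  proof -
    have "ln (3::real) \<ge> 1" using ln_ge_iff[of 3 1] exp_le by auto
    then show ?thesis by (intro mult_left_mono) auto
  qed
  ultimately show ?thesis unfolding m_def F_def by linarith
qed

lemma count_bound:
  assumes fo: "finite_order A"
  shows "\<exists>C (K::nat). C \<ge> 0 \<and> (\<forall>r\<ge>1. real (card {n. norm (t n) \<le> r}) \<le> C * r ^ K)"
proof -
  obtain \<rho> R0 where R0: "\<And>z. norm z > R0 \<Longrightarrow> norm (A z) \<le> exp (norm z powr \<rho>)"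
    using fo unfolding finite_order_def by blast
  define K where "K = nat \<lceil>max \<rho> 0\<rceil>"
  define L where "L = \<bar>ln (norm (A 0))\<bar>"
  define M0 where "M0 = real (card {n. norm (t n) \<le> R0 / 4})"
  define C where "C = 4^K + L + M0"
  have C: "C \<ge> 0" unfolding C_def L_def M0_def by simp
  have "real (card {n. norm (t n) \<le> r}) \<le> C * r ^ K" if r: "r \<ge> 1" for r
  proof (cases "4 * r > R0")
    case True
    have "(4*r) powr \<rho> \<le> (4*r) powr (real K)"
      using r unfolding K_def by (intro powr_mono) (auto, linarith)
    also have "\<dots> = 4^K * r^K" using r by (simp add: powr_realpow power_mult_distrib)
    finally have "real (card {n. norm (t n) \<le> r}) \<le> 4^K * r^K + L"
      using count_core[of R0 \<rho> r, OF R0] r True unfolding L_def by simp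
    also have "\<dots> \<le> 4^K * r^K + L * r^K + M0 * r^K"
    proof -
      have "L \<le> L * r^K" using r unfolding L_def by (simp add: mult_le_cancel_left1 one_le_power)
      moreover have "0 \<le> M0 * r^K" using r unfolding M0_def by simp
      ultimately show ?thesis by linarith
    qed
    also have "\<dots> = C * r^K" by (simp add: C_def algebra_simps)
    finally show ?thesis .
  next
    case False
    have "card {n. norm (t n) \<le> r} \<le> card {n. norm (t n) \<le> R0 / 4}"
      using False by (intro card_mono fin_small) auto
    then have "real (card {n. norm (t n) \<le> r}) \<le> M0" unfolding M0_def by simp
    also have "\<dots> \<le> M0 * r^K" using r unfolding M0_def by (simp add: mult_le_cancel_left1 one_le_power)
    also have "\<dots> \<le> C * r^K" using r unfolding C_def L_def by (intro mult_right_mono) auto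
    finally show ?thesis .
  qed
  then show ?thesis using C by blast
qed

end

context cdb
begin

lemma delta_sum:
  assumes C: "C \<ge> 0" "\<And>r. r \<ge> 1 \<Longrightarrow> real (card {n. norm (t n) \<le> r}) \<le> C * r ^ K"
    and F: "finite F"
  shows "(\<Sum>n\<in>F. 1 / (norm (t n) + 1) ^ (K+2)) \<le> 2 * C * 2^K"
proof -
  define s where "s n = norm (t n) + 1" for n
  have s1: "s n \<ge> 1" for n by (simp add: s_def)
  define X where "X = (\<Sum>n\<in>F. s n)"
  define J where "J = Suc (nat \<lceil>X\<rceil>)"
  have sJ: "s n \<le> 2 ^ J" if "n \<in> F" for n
  proof -
    have "s n \<le> X" unfolding X_def using F that s1 by (intro member_le_sum) (auto intro: order_trans[OF zero_le_one])
    also have "\<dots> \<le> real (nat \<lceil>X\<rceil>)" using real_nat_ceiling_ge[of X] by linarith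
    also have "\<dots> \<le> 2 ^ nat \<lceil>X\<rceil>" using less_exp[of "nat \<lceil>X\<rceil>"]
      by (metis less_imp_le of_nat_le_iff of_nat_numeral of_nat_power)
    also have "\<dots> \<le> (2::real) ^ J" unfolding J_def by simp
    finally show ?thesis .
  qed
  define j0 where "j0 n = (LEAST j. s n \<le> 2 ^ (j+1))" for n
  define g where "g n j = (if norm (t n) \<le> 2 ^ (j+1) then 1 / (2::real) ^ (j * (K+2)) else 0)" for n j
  have g0: "g n j \<ge> 0" for n j by (simp add: g_def)
  have le: "1 / (norm (t n) + 1) ^ (K+2) \<le> (\<Sum>j<J. g n j)" if n: "n \<in> F" for n
  proof -
    have ex: "s n \<le> 2 ^ ((J - 1) + 1)" using sJ[OF n] by (simp add: J_def)
    then have j0J: "j0 n \<le> J - 1" unfolding j0_def by (rule Least_le)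
    have up: "s n \<le> 2 ^ (j0 n + 1)" unfolding j0_def using ex by (rule LeastI)
    have lo: "2 ^ (j0 n) \<le> s n"
    proof (cases "j0 n")
      case 0 then show ?thesis using s1 by simp
    next
      case (Suc i)
      then have "\<not> s n \<le> 2 ^ (i + 1)" unfolding j0_def using not_less_Least[of i "\<lambda>j. s n \<le> 2 ^ (j+1)"]
        by (simp add: j0_def)
      then show ?thesis using Suc by simp
    qed
    have "1 / (norm (t n) + 1) ^ (K+2) = 1 / s n ^ (K+2)" by (simp add: s_def)
    also have "\<dots> \<le> 1 / (2 ^ j0 n) ^ (K+2)"
    proof -
      have "(2::real) ^ j0 n > 0" by simp
      then show ?thesis using lo s1[of n] by (intro divide_left_mono power_mono mult_pos_pos zero_less_power) auto
    qed
    also have "\<dots> = g n (j0 n)"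
    proof -
      have "((2::real) ^ j0 n) ^ (K+2) = 2 ^ (j0 n * (K+2))" by (rule power_mult[symmetric])
      moreover have "norm (t n) \<le> 2 ^ (j0 n + 1)" using up unfolding s_def by simp
      ultimately show ?thesis unfolding g_def by simp
    qed
    also have "\<dots> \<le> (\<Sum>j<J. g n j)" using j0J unfolding J_def by (intro member_le_sum g0) auto
    finally show ?thesis .
  qed
  have "(\<Sum>n\<in>F. 1 / (norm (t n) + 1) ^ (K+2)) \<le> (\<Sum>n\<in>F. \<Sum>j<J. g n j)"
    using le by (rule sum_mono)
  also have "\<dots> = (\<Sum>j<J. \<Sum>n\<in>F. g n j)" by (rule sum.swap)
  also have "\<dots> \<le> (\<Sum>j<J. C * 2^K * (1/4)^j)"
  proof (rule sum_mono)
    fix j assume "j \<in> {..<J}"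
    have "(\<Sum>n\<in>F. g n j) = (\<Sum>n\<in>{n\<in>F. norm (t n) \<le> 2^(j+1)}. 1 / (2::real) ^ (j * (K+2)))"
      unfolding g_def using F by (simp add: sum.inter_filter[symmetric])
    also have "\<dots> = real (card {n\<in>F. norm (t n) \<le> 2^(j+1)}) / 2 ^ (j * (K+2))" by simp
    also have "\<dots> \<le> real (card {n. norm (t n) \<le> 2^(j+1)}) / 2 ^ (j * (K+2))"
      by (intro divide_right_mono) (auto intro!: card_mono fin_small)
    also have "\<dots> \<le> C * (2^(j+1))^K / 2 ^ (j * (K+2))"
    proof -
      have "(1::real) \<le> 2^(j+1)" by (rule one_le_power) auto
      then show ?thesis by (intro divide_right_mono C(2)) auto
    qed
    also have "\<dots> = C * 2^K * (1/4)^j"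
    proof -
      have "(2::real)^(j * (K+2)) = 2^(j*K) * (2^j * 2^j)"
        by (simp add: power_add power_mult algebra_simps)
      also have "(2::real)^j * 2^j = 4^j" by (simp add: power_mult_distrib[symmetric])
      finally have "(2::real)^(j * (K+2)) = 2^(j*K) * 4^j" .
      moreover have "((2::real)^(j+1))^K = 2^(j*K) * 2^K"
      proof -
        have "((2::real)^(j+1))^K = 2^((j+1)*K)" by (rule power_mult[symmetric])
        also have "\<dots> = 2^(j*K) * 2^K" by (simp add: add_mult_distrib power_add)
        finally show ?thesis .
      qed
      ultimately show ?thesis by (simp add: power_one_over)
    qed
    finally show "(\<Sum>n\<in>F. g n j) \<le> C * 2^K * (1/4)^j" .
  qed
  also have "\<dots> = C * 2^K * (\<Sum>j<J. (1/4::real)^j)" by (simp add: sum_distrib_left)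
  also have "\<dots> \<le> C * 2^K * 2"
  proof -
    have "(\<Sum>j<J. (1/4::real)^j) = (1 - (1/4)^J) / (1 - 1/4)" by (simp add: sum_gp_strict)
    also have "\<dots> \<le> 2" by (simp add: field_simps)
    finally show ?thesis using C(1) by (intro mult_left_mono) auto
  qed
  finally show ?thesis by (simp add: mult_ac)
qed

lemma delta_summable:
  assumes C: "C \<ge> 0" "\<And>r. r \<ge> 1 \<Longrightarrow> real (card {n. norm (t n) \<le> r}) \<le> C * r ^ K"
  shows "summable (\<lambda>n. 1 / (norm (t n) + 1) ^ (K+2))"
proof (rule bounded_imp_summable[where B = "2 * C * 2^K"])
  fix n
  show "(\<Sum>k\<le>n. 1 / (norm (t k) + 1) ^ (K+2)) \<le> 2 * C * 2^K"
    by (rule delta_sum[OF C]) auto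
qed auto

end

context cdb
begin

lemma zero_density_of_finite:
  assumes E: "E \<in> sets borel" and M: "\<And>R. emeasure lborel (E \<inter> {0<..<R}) \<le> ennreal M" "M \<ge> 0"
  shows "zero_linear_density E"
proof -
  have Elb: "E \<in> sets lebesgue" using E by simp
  have le: "measure lebesgue (E \<inter> {0<..<R}) \<le> M" for R
  proof -
    have "E \<inter> {0<..<R} \<in> sets borel" using E by auto
    then have "measure lebesgue (E \<inter> {0<..<R}) = measure lborel (E \<inter> {0<..<R})" by simp
    also have "\<dots> \<le> M" unfolding measure_def using M by (intro enn2real_leI) auto
    finally show ?thesis .
  qed
  have "((\<lambda>R. measure lebesgue (E \<inter> {0<..<R}) / R) \<longlongrightarrow> 0) at_top"
  proof (rule tendsto_sandwich[where f = "\<lambda>_. 0" and h = "\<lambda>R. M / R"])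
    show "\<forall>\<^sub>F R in at_top. 0 \<le> measure lebesgue (E \<inter> {0<..<R}) / R"
      using eventually_gt_at_top[of 0] by eventually_elim auto
    show "\<forall>\<^sub>F R in at_top. measure lebesgue (E \<inter> {0<..<R}) / R \<le> M / R"
      using eventually_gt_at_top[of 0] by eventually_elim (use le in \<open>auto intro: divide_right_mono\<close>)
    show "((\<lambda>R. M / R) \<longlongrightarrow> 0) at_top" by real_asymp
  qed auto
  then show ?thesis unfolding zero_linear_density_def using Elb by simp
qed

lemma S_growth:
  assumes fo: "finite_order A" and l2: "summable (\<lambda>n. (norm (a n))\<^sup>2)"
  shows "\<exists>E N R0. E \<subseteq> {0<..} \<and> zero_linear_density E \<and> N > 0 \<and> (\<forall>n. norm (t n) \<in> E) \<and>
     (\<forall>z. norm z > R0 \<and> norm z \<notin> E \<longrightarrow> z \<notin> range t \<and> norm (S a z) \<le> norm z powr N)"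
proof -
  obtain C K where C: "C \<ge> 0" "\<And>r. r \<ge> 1 \<Longrightarrow> real (card {n. norm (t n) \<le> r}) \<le> C * r ^ K"
    using count_bound[OF fo] by blast
  define p where "p = K + 2"
  define \<delta> where "\<delta> n = 1 / (norm (t n) + 1) ^ p" for n
  have \<delta>s: "summable \<delta>" unfolding \<delta>_def p_def by (rule delta_summable[OF C])
  have \<delta>pos: "\<delta> n > 0" for n unfolding \<delta>_def by (simp add: add_nonneg_pos)
  define I where "I n = {norm (t n) - \<delta> n <..< norm (t n) + \<delta> n}" for n
  define E where "E = (\<Union>n. I n) \<inter> {0<..}"
  have Eb: "E \<in> sets borel" unfolding E_def I_def by auto
  have E0: "E \<subseteq> {0<..}" unfolding E_def by auto
  have tE: "norm (t n) \<in> E" for n unfolding E_def I_def using \<delta>pos[of n] t_nz[of n] by (auto intro!: exI[of _ n])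
  define M where "M = (\<Sum>n. 2 * \<delta> n)"
  have M0: "M \<ge> 0" unfolding M_def using \<delta>pos by (intro suminf_nonneg summable_mult \<delta>s) (auto intro: less_imp_le)
  have zld: "zero_linear_density E"
  proof (rule zero_density_of_finite[OF Eb _ M0])
    fix R
    have "emeasure lborel (E \<inter> {0<..<R}) \<le> emeasure lborel (\<Union>n. I n)"
      by (intro emeasure_mono) (auto simp: E_def I_def)
    also have "\<dots> \<le> (\<Sum>n. emeasure lborel (I n))"
      by (intro emeasure_subadditive_countably) (auto simp: I_def)
    also have "\<dots> = (\<Sum>n. ennreal (2 * \<delta> n))"
    proof -
      have "emeasure lborel (I n) = ennreal (2 * \<delta> n)" for n
        unfolding I_def using \<delta>pos[of n] by simp
      then show ?thesis by simp
    qed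
    also have "\<dots> = ennreal M" unfolding M_def
      using \<delta>pos \<delta>s by (intro suminf_ennreal2) (auto intro: less_imp_le summable_mult)
    finally show "emeasure lborel (E \<inter> {0<..<R}) \<le> ennreal M" .
  qed
  define L where "L = (\<Sum>n. (norm (a n))\<^sup>2)"
  define W where "W = (\<Sum>n. w n)"
  have W0: "W \<ge> 0" unfolding W_def using w_pos w_summable by (intro suminf_nonneg) (auto intro: less_imp_le)
  have L0: "L \<ge> 0" unfolding L_def using l2 by (intro suminf_nonneg) auto
  define q where "q = 2 * p + 2"
  define R0 where "R0 = max 1 (L + 5 * W + W * 3 ^ q)"
  have bound: "z \<notin> range t \<and> norm (S a z) \<le> norm z powr (real (q + 1))"
    if z: "norm z > R0" "norm z \<notin> E" for z
  proof -
    define r where "r = norm z"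
    have r1: "r \<ge> 1" "r > R0" using z unfolding r_def R0_def by auto
    define P where "P = 5 + (2*r+1)^q"
    have far: "\<delta> n \<le> norm (z - t n)" for n
    proof -
      have "r \<notin> I n" using z(2) r1 unfolding E_def r_def by auto
      then have "\<delta> n \<le> \<bar>r - norm (t n)\<bar>" unfolding I_def by auto
      also have "\<dots> \<le> norm (z - t n)" unfolding r_def by (rule norm_triangle_ineq3)
      finally show ?thesis .
    qed
    have znot: "z \<notin> range t" using far \<delta>pos by (metis (no_types, lifting) imageE norm_zero not_le right_minus_eq)
    have ratio: "\<mu> n / (norm (z - t n))\<^sup>2 \<le> w n * P" for n
    proof -
      define s where "s = norm (t n)"
      define u where "u = norm (z - t n)"
      have u0: "u > 0" using far[of n] \<delta>pos[of n] unfolding u_def by linarith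
      have rs: "\<bar>r - s\<bar> \<le> u" unfolding r_def s_def u_def by (rule norm_triangle_ineq3)
      have "(s\<^sup>2 + 1) \<le> u\<^sup>2 * P"
      proof (cases "s \<ge> 2 * r")
        case True
        then have "u \<ge> s / 2" using rs r1 by linarith
        then have "u\<^sup>2 \<ge> (s/2)\<^sup>2" using r1 True by (intro power_mono) auto
        moreover have "s \<ge> 2" using True r1 by linarith
        moreover have "(s/2)\<^sup>2 = s\<^sup>2 / 4" by (simp add: power_divide)
        ultimately have u4: "u\<^sup>2 \<ge> s\<^sup>2 / 4" by simp
        have "s\<^sup>2 \<ge> 2\<^sup>2" using \<open>s \<ge> 2\<close> by (intro power_mono) auto
        then have "s\<^sup>2 + 1 \<le> 5 * u\<^sup>2" using u4 by simp
        also have "\<dots> \<le> u\<^sup>2 * P"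
        proof -
          have "0 \<le> u\<^sup>2 * (2*r+1)^q" using r1 by simp
          then show ?thesis unfolding P_def by (simp add: algebra_simps)
        qed
        finally show ?thesis .
      next
        case False
        have "\<delta> n \<ge> 1 / (2*r+1)^p"
        proof -
          have s0: "s \<ge> 0" unfolding s_def by simp
          then have "(s + 1)^p > 0" by simp
          then show ?thesis unfolding \<delta>_def s_def[symmetric] using False r1 s0
            by (intro divide_left_mono power_mono mult_pos_pos) auto
        qed
        then have ul: "u \<ge> 1 / (2*r+1)^p" using far[of n] unfolding u_def by linarith
        have pos: "(2*r+1)^p > 0" using r1 by simp
        have "1 \<le> u * (2*r+1)^p" using ul pos by (simp add: divide_le_eq mult.commute)
        then have "1 \<le> (u * (2*r+1)^p)\<^sup>2" by (simp add: one_le_power)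
        then have one: "1 \<le> u\<^sup>2 * (2*r+1)^(2*p)" by (simp add: power_mult_distrib power_mult mult.commute)
        have "s\<^sup>2 + 1 \<le> (2*r+1)\<^sup>2"
        proof -
          have "s \<ge> 0" unfolding s_def by simp
          then have "s\<^sup>2 \<le> (2*r)\<^sup>2" using False by (intro power_mono) auto
          then show ?thesis using r1 by (simp add: power2_eq_square algebra_simps)
        qed
        also have "\<dots> \<le> (2*r+1)\<^sup>2 * (u\<^sup>2 * (2*r+1)^(2*p))"
          using one by (simp add: mult_le_cancel_left1)
        also have "\<dots> = u\<^sup>2 * (2*r+1)^q" unfolding q_def by (simp add: power_add mult_ac power2_eq_square)
        also have "\<dots> \<le> u\<^sup>2 * P" unfolding P_def by (intro mult_left_mono) auto
        finally show ?thesis .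
      qed
      then have "\<mu> n \<le> w n * (u\<^sup>2 * P)" unfolding mu_eq[of n] s_def[symmetric]
        using w_pos[of n] by (intro mult_left_mono) auto
      then have "\<mu> n / u\<^sup>2 \<le> w n * (u\<^sup>2 * P) / u\<^sup>2" using u0 by (intro divide_right_mono) auto
      also have "\<dots> = w n * P" using u0 by simp
      finally show ?thesis unfolding u_def .
    qed
    have tb: "norm (trm a n z) \<le> ((norm (a n))\<^sup>2 + w n * P) / 2" for n
    proof -
      have "((norm (a n))\<^sup>2 + \<mu> n / (norm (z - t n))\<^sup>2) / 2 \<le> ((norm (a n))\<^sup>2 + w n * P) / 2"
        using ratio[of n] by (intro divide_right_mono add_left_mono) auto
      then show ?thesis using order_trans[OF trm_bound[of a n z]] by blast
    qed
    have sb: "summable (\<lambda>n. ((norm (a n))\<^sup>2 + w n * P) / 2)"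
      using l2 w_summable by (intro summable_divide summable_add summable_mult2) auto
    have sn: "summable (\<lambda>n. norm (trm a n z))"
      by (rule summable_comparison_test'[OF sb]) (use tb in auto)
    have "norm (S a z) \<le> (\<Sum>n. norm (trm a n z))" unfolding S_def by (rule summable_norm[OF sn])
    also have "\<dots> \<le> (\<Sum>n. ((norm (a n))\<^sup>2 + w n * P) / 2)"
      by (rule suminf_le[OF tb sn sb])
    also have "\<dots> = (L + W * P) / 2"
    proof -
      have s2: "summable (\<lambda>n. w n * P)" using w_summable by (rule summable_mult2)
      have "(\<Sum>n. ((norm (a n))\<^sup>2 + w n * P) / 2) = (\<Sum>n. (norm (a n))\<^sup>2 + w n * P) / 2"
        using l2 s2 by (intro suminf_divide summable_add)
      also have "(\<Sum>n. (norm (a n))\<^sup>2 + w n * P) = L + (\<Sum>n. w n * P)"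
        unfolding L_def using l2 s2 by (rule suminf_add[symmetric])
      also have "(\<Sum>n. w n * P) = W * P" unfolding W_def using w_summable by (rule suminf_mult2[symmetric])
      finally show ?thesis .
    qed
    also have "\<dots> \<le> (L + 5 * W + W * 3^q) * r^q"
    proof -
      have "(2*r+1)^q \<le> (3*r)^q" using r1 by (intro power_mono) auto
      also have "\<dots> = 3^q * r^q" by (simp add: power_mult_distrib)
      finally have a: "(2*r+1)^q \<le> 3^q * r^q" .
      have rq: "r^q \<ge> 1" using r1 by (simp add: one_le_power)
      have "(L + W * P) / 2 \<le> L + W * P" using L0 W0 P_def r1 by (simp add: add_nonneg_nonneg)
      also have "\<dots> = L + 5 * W + W * (2*r+1)^q" unfolding P_def by (simp add: algebra_simps)
      also have "\<dots> \<le> L * r^q + 5 * W * r^q + W * (3^q * r^q)"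
        using a rq L0 W0 by (intro add_mono mult_left_mono) (auto simp: mult_le_cancel_left1)
      also have "\<dots> = (L + 5 * W + W * 3^q) * r^q" by (simp add: algebra_simps)
      finally show ?thesis .
    qed
    also have "\<dots> \<le> r * r^q" using r1 unfolding R0_def by (intro mult_right_mono) auto
    also have "\<dots> = r powr (real (q + 1))"
    proof -
      have "r powr (real (q + 1)) = r ^ (q + 1)" using r1 by (intro powr_realpow) auto
      then show ?thesis by simp
    qed
    finally show ?thesis using znot by (simp add: r_def)
  qed
  show ?thesis
    by (rule exI[of _ E], rule exI[of _ "real (q + 1)"], rule exI[of _ R0]) (use E0 zld tE bound in auto)
qed

end

lemma ball_borel_meas[measurable]: "ball (c::complex) r \<in> sets borel" by simp

lemma emeasure_ball_complex: "r \<ge> 0 \<Longrightarrow> emeasure lborel (ball (c::complex) r) = ennreal (pi * r\<^sup>2)"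
  using emeasure_ball[of r c] by (simp add: unit_ball_vol_numeral)

lemma ennreal_le_suminf: "(f j :: ennreal) \<le> (\<Sum>i. f i)"
proof -
  have "sum f {j} \<le> suminf f" by (rule sum_le_suminf) (auto intro: summableI)
  then show ?thesis by simp
qed

lemma inv_dist_pointwise:
  fixes t0 z :: complex
  assumes R: "R > 0"
  shows "ennreal (1 / norm (z - t0)) \<le> ennreal (1/R) + (\<Sum>k. ennreal (2^(k+1) / R) * indicator (ball t0 (R / 2^k)) z)"
proof -
  define u where "u = norm (z - t0)"
  show ?thesis
  proof (cases "u < R \<and> u > 0")
    case False
    then have "1 / u \<le> 1 / R" using R by (auto simp: u_def frac_le)
    then have "ennreal (1 / u) \<le> ennreal (1/R)" by (rule ennreal_leI)
    also have "\<dots> \<le> ennreal (1/R) + (\<Sum>k. ennreal (2^(k+1) / R) * indicator (ball t0 (R / 2^k)) z)" by simp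
    finally show ?thesis by (simp add: u_def)
  next
    case True
    have ex: "\<exists>k. R / 2^(k+1) \<le> u"
    proof -
      obtain n :: nat where n: "R / u < n" using reals_Archimedean2 by blast
      have "real n < 2^(n+1)" using less_exp[of "n+1"] by (metis add_lessD1 less_exp of_nat_less_numeral_power_cancel_iff)
      then have "R / u < 2^(n+1)" using n by linarith
      then have "R < 2^(n+1) * u" using True by (simp add: divide_less_eq)
      then have "R / 2^(n+1) \<le> u" by (simp add: divide_le_eq mult.commute)
      then show ?thesis by blast
    qed
    define j where "j = (LEAST k. R / 2^(k+1) \<le> u)"
    have j1: "R / 2^(j+1) \<le> u" unfolding j_def using ex by (rule LeastI_ex)
    have j2: "u < R / 2^j"
    proof (cases j)
      case 0 then show ?thesis using True by simp
    next
      case (Suc i)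
      then have "\<not> R / 2^(i+1) \<le> u" unfolding j_def using not_less_Least[of i "\<lambda>k. R / 2^(k+1) \<le> u"]
        by (simp add: j_def)
      then show ?thesis using Suc by simp
    qed
    have zin: "z \<in> ball t0 (R / 2^j)" using j2 by (simp add: u_def dist_norm norm_minus_commute)
    have "1 / u \<le> 2^(j+1) / R"
    proof -
      have "R \<le> 2^(j+1) * u" using j1 by (simp add: divide_le_eq mult.commute)
      then show ?thesis using True R by (simp add: field_simps)
    qed
    then have "ennreal (1/u) \<le> ennreal (2^(j+1) / R) * indicator (ball t0 (R / 2^j)) z"
      using zin by (simp add: ennreal_leI)
    also have "\<dots> \<le> (\<Sum>k. ennreal (2^(k+1) / R) * indicator (ball t0 (R / 2^k)) z)"
      by (rule ennreal_le_suminf)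
    also have "\<dots> \<le> ennreal (1/R) + (\<Sum>k. ennreal (2^(k+1) / R) * indicator (ball t0 (R / 2^k)) z)" by simp
    finally show ?thesis by (simp add: u_def)
  qed
qed

lemma inv_dist_integral:
  fixes t0 :: complex
  assumes R: "R > 0"
  shows "(\<integral>\<^sup>+ (z::complex). ennreal (1 / norm (z - t0)) * indicator (ball 0 R) z \<partial>lborel) \<le> ennreal (15 * pi * R\<^sup>2 / (R + norm t0))"
proof (cases "norm t0 > 2 * R")
  case True
  have "(\<integral>\<^sup>+ (z::complex). ennreal (1 / norm (z - t0)) * indicator (ball 0 R) z \<partial>lborel)
      \<le> (\<integral>\<^sup>+ (z::complex). ennreal (3 / (R + norm t0)) * indicator (ball 0 R) z \<partial>lborel)"
  proof (rule nn_integral_mono)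
    fix z :: complex
    show "ennreal (1 / norm (z - t0)) * indicator (ball 0 R) z \<le> ennreal (3 / (R + norm t0)) * indicator (ball 0 R) z"
    proof (cases "z \<in> ball 0 R")
      case True
      then have "norm z < R" by simp
      moreover have "norm t0 \<le> norm z + norm (z - t0)" using norm_triangle_ineq2[of t0 z] by (simp add: norm_minus_commute)
      ultimately have "3 * norm (z - t0) \<ge> R + norm t0" using \<open>norm t0 > 2 * R\<close> by linarith
      then have "norm (z - t0) \<ge> (R + norm t0) / 3" by simp
      moreover have "(R + norm t0) / 3 > 0" using R by (simp add: add_pos_nonneg)
      ultimately have "1 / norm (z - t0) \<le> 1 / ((R + norm t0) / 3)"
        by (intro divide_left_mono mult_pos_pos) auto
      then show ?thesis using True by (simp add: ennreal_leI)
    qed simp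
  qed
  also have "\<dots> = ennreal (3 / (R + norm t0)) * ennreal (pi * R\<^sup>2)"
    using R by (simp add: nn_integral_cmult_indicator emeasure_ball_complex)
  also have "\<dots> = ennreal (3 * pi * R\<^sup>2 / (R + norm t0))"
    using R by (simp add: ennreal_mult'[symmetric] add_pos_nonneg)
  also have "\<dots> \<le> ennreal (15 * pi * R\<^sup>2 / (R + norm t0))"
    using R by (intro ennreal_leI divide_right_mono) (auto simp: add_pos_nonneg)
  finally show ?thesis .
next
  case False
  define \<rho> where "\<rho> k = R / 2^k" for k :: nat
  have "(\<integral>\<^sup>+ (z::complex). ennreal (1 / norm (z - t0)) * indicator (ball 0 R) z \<partial>lborel)
      \<le> (\<integral>\<^sup>+ (z::complex). ennreal (1/R) * indicator (ball 0 R) z + (\<Sum>k. ennreal (2^(k+1) / R) * indicator (ball t0 (\<rho> k)) z) \<partial>lborel)"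
  proof (rule nn_integral_mono)
    fix z :: complex
    show "ennreal (1 / norm (z - t0)) * indicator (ball 0 R) z \<le> ennreal (1/R) * indicator (ball 0 R) z + (\<Sum>k. ennreal (2^(k+1) / R) * indicator (ball t0 (\<rho> k)) z)"
    proof (cases "z \<in> ball 0 R")
      case True
      then show ?thesis using inv_dist_pointwise[OF R, of z t0] by (simp add: \<rho>_def)
    qed simp
  qed
  also have "\<dots> = (\<integral>\<^sup>+ (z::complex). ennreal (1/R) * indicator (ball 0 R) z \<partial>lborel) + (\<integral>\<^sup>+ (z::complex). (\<Sum>k. ennreal (2^(k+1) / R) * indicator (ball t0 (\<rho> k)) z) \<partial>lborel)"
    by (rule nn_integral_add) measurable
  also have "(\<integral>\<^sup>+ (z::complex). (\<Sum>k. ennreal (2^(k+1) / R) * indicator (ball t0 (\<rho> k)) z) \<partial>lborel)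
      = (\<Sum>k. \<integral>\<^sup>+ (z::complex). ennreal (2^(k+1) / R) * indicator (ball t0 (\<rho> k)) z \<partial>lborel)"
    by (rule nn_integral_suminf) measurable
  also have "\<dots> = (\<Sum>k. ennreal (2 * pi * R * (1/2)^k))"
  proof -
    have "(\<integral>\<^sup>+ (z::complex). ennreal (2^(k+1) / R) * indicator (ball t0 (\<rho> k)) z \<partial>lborel) = ennreal (2 * pi * R * (1/2)^k)" for k
    proof -
      have "(\<integral>\<^sup>+ (z::complex). ennreal (2^(k+1) / R) * indicator (ball t0 (\<rho> k)) z \<partial>lborel) = ennreal (2^(k+1) / R) * ennreal (pi * (\<rho> k)\<^sup>2)"
        using R by (simp add: nn_integral_cmult_indicator emeasure_ball_complex \<rho>_def)
      also have "\<dots> = ennreal (2^(k+1) / R * (pi * (\<rho> k)\<^sup>2))" using R by (simp add: ennreal_mult'[symmetric])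
      also have "2^(k+1) / R * (pi * (\<rho> k)\<^sup>2) = 2 * pi * R * (1/2)^k"
        using R by (simp add: \<rho>_def power2_eq_square field_simps power_add)
      finally show ?thesis .
    qed
    then show ?thesis by simp
  qed
  also have "\<dots> = ennreal (4 * pi * R)"
  proof -
    have "(\<lambda>k. 2 * pi * R * (1/2::real)^k) sums (2 * pi * R * 2)"
      using geometric_sums[of "1/2::real"] by (intro sums_mult) simp
    then show ?thesis using R by (subst suminf_ennreal_eq) (auto simp: mult_ac)
  qed
  also have "(\<integral>\<^sup>+ (z::complex). ennreal (1/R) * indicator (ball 0 R) z \<partial>lborel) = ennreal (pi * R)"
  proof -
    have "(\<integral>\<^sup>+ (z::complex). ennreal (1/R) * indicator (ball 0 R) z \<partial>lborel) = ennreal (1/R) * ennreal (pi * R\<^sup>2)"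
      using R by (simp add: nn_integral_cmult_indicator emeasure_ball_complex)
    also have "\<dots> = ennreal (pi * R)" using R by (simp add: ennreal_mult'[symmetric] power2_eq_square)
    finally show ?thesis .
  qed
  also have "ennreal (pi * R) + ennreal (4 * pi * R) = ennreal (5 * pi * R)"
    using R by (simp add: ennreal_plus[symmetric] del: ennreal_plus)
  also have "\<dots> \<le> ennreal (15 * pi * R\<^sup>2 / (R + norm t0))"
  proof (rule ennreal_leI)
    have "R + norm t0 \<le> 3 * R" using False by linarith
    then have "5 * pi * R * (R + norm t0) \<le> 5 * pi * R * (3 * R)" using R by (intro mult_left_mono) auto
    then show "5 * pi * R \<le> 15 * pi * R\<^sup>2 / (R + norm t0)"
      using R by (simp add: le_divide_eq add_pos_nonneg power2_eq_square mult_ac)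
  qed
  finally show ?thesis .
qed

context cdb
begin

definition cc :: "(nat \<Rightarrow> complex) \<Rightarrow> nat \<Rightarrow> real" where
  "cc a n = norm (a n) * sqrt (\<mu> n)"

definition Gf :: "(nat \<Rightarrow> complex) \<Rightarrow> complex \<Rightarrow> ennreal" where
  "Gf a z = (\<Sum>n. ennreal (cc a n / norm (z - t n)))"

definition Phi :: "(nat \<Rightarrow> complex) \<Rightarrow> real \<Rightarrow> real" where
  "Phi a R = 15 * pi * (\<Sum>n. cc a n / (R + norm (t n)))"

lemma lim_c_div: "((\<lambda>R::real. c / (R + s)) \<longlongrightarrow> 0) at_top"
  by real_asymp

lemma cc_nonneg: "cc a n \<ge> 0" unfolding cc_def using mu_pos[of n] by simp

lemma cc_bound: "cc a n / (1 + norm (t n)) \<le> ((norm (a n))\<^sup>2 + w n) / 2"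
proof -
  define s where "s = norm (t n)"
  have s0: "s \<ge> 0" by (simp add: s_def)
  have "sqrt (\<mu> n) = sqrt (w n) * sqrt (s\<^sup>2 + 1)" unfolding mu_eq[of n] s_def by (simp add: real_sqrt_mult)
  also have "sqrt (s\<^sup>2 + 1) \<le> 1 + s"
  proof (rule real_le_lsqrt)
    show "s\<^sup>2 + 1 \<le> (1 + s)\<^sup>2" using s0 by (simp add: power2_eq_square algebra_simps)
  qed (use s0 in auto)
  then have "sqrt (w n) * sqrt (s\<^sup>2 + 1) \<le> sqrt (w n) * (1 + s)"
    using w_pos[of n] by (intro mult_left_mono) auto
  finally have "sqrt (\<mu> n) \<le> sqrt (w n) * (1 + s)" .
  then have "cc a n \<le> norm (a n) * (sqrt (w n) * (1 + s))" unfolding cc_def by (intro mult_left_mono) auto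
  then have "cc a n / (1 + s) \<le> norm (a n) * sqrt (w n)" using s0 by (simp add: divide_le_eq mult_ac)
  also have "\<dots> \<le> ((norm (a n))\<^sup>2 + w n) / 2"
  proof -
    have "0 \<le> (norm (a n) - sqrt (w n))\<^sup>2" by simp
    then show ?thesis using w_pos[of n] by (simp add: power2_eq_square algebra_simps)
  qed
  finally show ?thesis by (simp add: s_def)
qed

lemma cc_summable:
  assumes l2: "summable (\<lambda>n. (norm (a n))\<^sup>2)" and R: "R \<ge> 1"
  shows "summable (\<lambda>n. cc a n / (R + norm (t n)))"
proof (rule summable_comparison_test')
  show "summable (\<lambda>n. ((norm (a n))\<^sup>2 + w n) / 2)" using l2 w_summable by (intro summable_divide summable_add)
  fix n
  have "cc a n / (R + norm (t n)) \<le> cc a n / (1 + norm (t n))"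
    using R cc_nonneg[of a n] by (intro divide_left_mono) (auto simp: add_pos_nonneg)
  moreover have "norm (cc a n / (R + norm (t n))) = cc a n / (R + norm (t n))"
    using R cc_nonneg[of a n] by (simp add: add_nonneg_nonneg)
  ultimately show "norm (cc a n / (R + norm (t n))) \<le> ((norm (a n))\<^sup>2 + w n) / 2"
    using cc_bound[of a n] by linarith
qed

lemma Gf_meas: "Gf a \<in> borel_measurable borel"
  unfolding Gf_def by measurable

lemma Gf_ge:
  assumes l2: "summable (\<lambda>n. (norm (a n))\<^sup>2)" and z: "z \<notin> range t"
  shows "ennreal (norm (S a z)) \<le> Gf a z"
proof -
  have sn: "summable (\<lambda>n. norm (trm a n z))" using S_props(2)[where J=UNIV, OF l2] z by auto
  have eq: "norm (trm a n z) = cc a n / norm (z - t n)" for n by (simp add: norm_trm cc_def)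
  have "norm (S a z) \<le> (\<Sum>n. norm (trm a n z))" unfolding S_def by (rule summable_norm[OF sn])
  then have "ennreal (norm (S a z)) \<le> ennreal (\<Sum>n. norm (trm a n z))" by (rule ennreal_leI)
  also have "\<dots> = (\<Sum>n. ennreal (norm (trm a n z)))" using sn by (intro suminf_ennreal2[symmetric]) auto
  finally show ?thesis unfolding Gf_def eq .
qed

lemma Gf_int:
  assumes l2: "summable (\<lambda>n. (norm (a n))\<^sup>2)" and R: "R \<ge> 1"
  shows "(\<integral>\<^sup>+ (z::complex). Gf a z * indicator (ball 0 R) z \<partial>lborel) \<le> ennreal (R\<^sup>2 * Phi a R)"
proof -
  have "(\<integral>\<^sup>+ (z::complex). Gf a z * indicator (ball 0 R) z \<partial>lborel)
      = (\<integral>\<^sup>+ (z::complex). (\<Sum>n. ennreal (cc a n / norm (z - t n)) * indicator (ball 0 R) z) \<partial>lborel)"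
    unfolding Gf_def by simp
  also have "\<dots> = (\<Sum>n. \<integral>\<^sup>+ (z::complex). ennreal (cc a n / norm (z - t n)) * indicator (ball 0 R) z \<partial>lborel)"
    by (rule nn_integral_suminf) measurable
  also have "\<dots> \<le> (\<Sum>n. ennreal (15 * pi * R\<^sup>2 * (cc a n / (R + norm (t n)))))"
  proof (intro suminf_le summableI)
    fix n
    have "(\<integral>\<^sup>+ (z::complex). ennreal (cc a n / norm (z - t n)) * indicator (ball 0 R) z \<partial>lborel)
        = (\<integral>\<^sup>+ (z::complex). ennreal (cc a n) * (ennreal (1 / norm (z - t n)) * indicator (ball 0 R) z) \<partial>lborel)"
    proof (intro nn_integral_cong)
      fix x :: complex
      have "ennreal (cc a n / norm (x - t n)) = ennreal (cc a n * (1 / norm (x - t n)))" by simp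
      also have "\<dots> = ennreal (cc a n) * ennreal (1 / norm (x - t n))"
        using cc_nonneg[of a n] by (intro ennreal_mult) auto
      finally show "ennreal (cc a n / norm (x - t n)) * indicator (ball 0 R) x =
         ennreal (cc a n) * (ennreal (1 / norm (x - t n)) * indicator (ball 0 R) x)" by (simp add: mult.assoc)
    qed
    also have "\<dots> = ennreal (cc a n) * (\<integral>\<^sup>+ (z::complex). ennreal (1 / norm (z - t n)) * indicator (ball 0 R) z \<partial>lborel)"
      by (rule nn_integral_cmult) measurable
    also have "\<dots> \<le> ennreal (cc a n) * ennreal (15 * pi * R\<^sup>2 / (R + norm (t n)))"
      using R by (intro mult_left_mono inv_dist_integral) auto
    also have "\<dots> = ennreal (15 * pi * R\<^sup>2 * (cc a n / (R + norm (t n))))"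
      using cc_nonneg[of a n] R by (simp add: ennreal_mult'[symmetric] ennreal_mult[symmetric] add_pos_nonneg mult_ac)
    finally show "(\<integral>\<^sup>+ (z::complex). ennreal (cc a n / norm (z - t n)) * indicator (ball 0 R) z \<partial>lborel)
        \<le> ennreal (15 * pi * R\<^sup>2 * (cc a n / (R + norm (t n))))" .
  qed
  also have "\<dots> = ennreal (\<Sum>n. 15 * pi * R\<^sup>2 * (cc a n / (R + norm (t n))))"
    using cc_summable[OF l2 R] cc_nonneg R
    by (intro suminf_ennreal2 summable_mult) (auto simp: add_pos_nonneg)
  also have "(\<Sum>n. 15 * pi * R\<^sup>2 * (cc a n / (R + norm (t n)))) = R\<^sup>2 * Phi a R"
    unfolding Phi_def using cc_summable[OF l2 R] by (subst suminf_mult) (auto simp: mult_ac)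
  finally show ?thesis .
qed

lemma Phi_lim:
  assumes l2: "summable (\<lambda>n. (norm (a n))\<^sup>2)"
  shows "(Phi a \<longlongrightarrow> 0) at_top"
proof -
  have "((\<lambda>R. \<Sum>n. cc a n / (R + norm (t n))) \<longlongrightarrow> (\<Sum>n. (0::real))) at_top"
  proof (rule tannerys_theorem[THEN conjunct2, THEN conjunct2])
    show "((\<lambda>R. cc a k / (R + norm (t k))) \<longlongrightarrow> 0) at_top" for k
      by (rule lim_c_div)
    show "summable (\<lambda>n. ((norm (a n))\<^sup>2 + w n) / 2)" using l2 w_summable by (intro summable_divide summable_add)
    have "\<forall>\<^sub>F x in at_top \<times>\<^sub>F at_top. (\<lambda>k. True) (fst x) \<and> (\<lambda>R. R \<ge> (1::real)) (snd x)"
      by (intro eventually_prodI) (auto simp: eventually_ge_at_top)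
    then show "\<forall>\<^sub>F (k, R) in at_top \<times>\<^sub>F at_top. norm (cc a k / (R + norm (t k))) \<le> ((norm (a k))\<^sup>2 + w k) / 2"
    proof eventually_elim
      case (elim x)
      obtain k R where x: "x = (k, R)" by (cases x)
      then have R: "R \<ge> 1" using elim by simp
      have "cc a k / (R + norm (t k)) \<le> cc a k / (1 + norm (t k))"
        using R cc_nonneg[of a k] by (intro divide_left_mono) (auto simp: add_pos_nonneg)
      moreover have "norm (cc a k / (R + norm (t k))) = cc a k / (R + norm (t k))"
        using R cc_nonneg[of a k] by (simp add: add_nonneg_nonneg)
      ultimately have "norm (cc a k / (R + norm (t k))) \<le> ((norm (a k))\<^sup>2 + w k) / 2"
        using cc_bound[of a k] by linarith
      then show ?case using x by simp
    qed
  qed simp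
  then have "((\<lambda>R. 15 * pi * (\<Sum>n. cc a n / (R + norm (t n)))) \<longlongrightarrow> 15 * pi * 0) at_top"
    by (intro tendsto_mult tendsto_const) simp
  then show ?thesis unfolding Phi_def[abs_def] by simp
qed

lemma Phi_mono:
  assumes l2: "summable (\<lambda>n. (norm (a n))\<^sup>2)" and R: "1 \<le> R1" "R1 \<le> R2"
  shows "Phi a R2 \<le> Phi a R1"
proof -
  have "(\<Sum>n. cc a n / (R2 + norm (t n))) \<le> (\<Sum>n. cc a n / (R1 + norm (t n)))"
  proof (rule suminf_le)
    show "cc a n / (R2 + norm (t n)) \<le> cc a n / (R1 + norm (t n))" for n
      using R cc_nonneg[of a n] by (intro divide_left_mono) (auto simp: add_pos_nonneg)
  qed (use cc_summable[OF l2] R in auto)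
  then show ?thesis unfolding Phi_def by simp
qed

lemma Phi_nonneg:
  assumes l2: "summable (\<lambda>n. (norm (a n))\<^sup>2)" and R: "1 \<le> R"
  shows "Phi a R \<ge> 0"
  unfolding Phi_def using cc_summable[OF l2 R] cc_nonneg R
  by (intro mult_nonneg_nonneg suminf_nonneg) (auto simp: add_pos_nonneg)

end

lemma emeasure_cball_complex: "r \<ge> 0 \<Longrightarrow> emeasure lborel (cball (c::complex) r) = ennreal (pi * r\<^sup>2)"
  using emeasure_cball[of r c] by (simp add: unit_ball_vol_numeral)

context cdb
begin

lemma range_t_closed: "closed (range t)"
proof -
  have "open (- t ` UNIV)" using S_props(1)[where a="\<lambda>_. 0" and J=UNIV] by simp
  then show ?thesis by (simp add: closed_def)
qed

lemma range_t_null: "range t \<in> null_sets lborel"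
  by (rule countable_imp_null_set_lborel) simp

lemma Omega_forward:
  assumes l2: "summable (\<lambda>n. (norm (a n))\<^sup>2)"
  shows "\<exists>\<Omega>. pos_upper_area_density \<Omega> \<and>
    (\<forall>\<epsilon>>0. \<exists>R. \<forall>z\<in>\<Omega>. norm z > R \<longrightarrow> z \<notin> range t \<and> norm (S a z) \<le> \<epsilon>)"
proof -
  define \<gamma> where "\<gamma> \<rho> = sqrt (Phi a (max 1 \<rho>)) + 1 / max 1 \<rho>" for \<rho>
  have \<gamma>_anti: "\<gamma> \<rho>2 \<le> \<gamma> \<rho>1" if "\<rho>1 \<le> \<rho>2" for \<rho>1 \<rho>2
  proof -
    have "Phi a (max 1 \<rho>2) \<le> Phi a (max 1 \<rho>1)" using that by (intro Phi_mono[OF l2]) auto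
    then have "sqrt (Phi a (max 1 \<rho>2)) \<le> sqrt (Phi a (max 1 \<rho>1))" by simp
    moreover have "1 / max 1 \<rho>2 \<le> 1 / max 1 \<rho>1" using that by (intro divide_left_mono) auto
    ultimately show ?thesis unfolding \<gamma>_def by linarith
  qed
  have \<gamma>_pos: "\<gamma> \<rho> > 0" for \<rho>
  proof -
    have "sqrt (Phi a (max 1 \<rho>)) \<ge> 0" using Phi_nonneg[OF l2, of "max 1 \<rho>"] by simp
    then show ?thesis unfolding \<gamma>_def by (simp add: add_nonneg_pos)
  qed
  have \<gamma>_meas: "\<gamma> \<in> borel_measurable borel"
  proof -
    have "mono (\<lambda>\<rho>. - \<gamma> \<rho>)" by (rule monoI) (use \<gamma>_anti in auto)
    then have "(\<lambda>\<rho>. - \<gamma> \<rho>) \<in> borel_measurable borel" by (rule borel_measurable_mono)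
    then have "(\<lambda>\<rho>. - (- \<gamma> \<rho>)) \<in> borel_measurable borel" by measurable
    then show ?thesis by simp
  qed
  have \<gamma>_lim: "(\<gamma> \<longlongrightarrow> 0) at_top"
  proof -
    have "((\<lambda>\<rho>. sqrt (Phi a \<rho>) + 1 / \<rho>) \<longlongrightarrow> sqrt 0 + 0) at_top"
      by (intro tendsto_add tendsto_real_sqrt Phi_lim[OF l2] lim_c_div[where s=0, simplified])
    moreover have "\<forall>\<^sub>F \<rho> in at_top. sqrt (Phi a \<rho>) + 1 / \<rho> = \<gamma> \<rho>"
      using eventually_ge_at_top[of 1] by eventually_elim (simp add: \<gamma>_def max_def)
    ultimately show ?thesis by (simp add: tendsto_cong)
  qed
  define \<Omega> where "\<Omega> = {z. Gf a z \<le> ennreal (\<gamma> (norm z))} - range t"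
  have Gm[measurable]: "Gf a \<in> borel_measurable borel" by (rule Gf_meas)
  have gm[measurable]: "\<gamma> \<in> borel_measurable borel" by (rule \<gamma>_meas)
  have rt[measurable]: "range t \<in> sets borel" using range_t_closed by simp
  have \<Omega>b[measurable]: "\<Omega> \<in> sets borel" unfolding \<Omega>_def by measurable
  have main: "pi * R\<^sup>2 - R\<^sup>2 * sqrt (Phi a R) \<le> measure lborel (\<Omega> \<inter> ball 0 R)" if R: "R \<ge> 1" for R
  proof -
    define B where "B = {z \<in> ball 0 R. 1 \<le> ennreal (1 / \<gamma> R) * Gf a z}"
    have Bb: "B \<in> sets borel" unfolding B_def by measurable
    have sub: "ball 0 R \<subseteq> (\<Omega> \<inter> ball 0 R) \<union> range t \<union> B"
    proof
      fix z :: complex assume z: "z \<in> ball 0 R"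
      show "z \<in> (\<Omega> \<inter> ball 0 R) \<union> range t \<union> B"
      proof (cases "z \<in> range t \<or> z \<in> B")
        case False
        then have "\<not> 1 \<le> ennreal (1 / \<gamma> R) * Gf a z" using z by (auto simp: B_def)
        moreover have "ennreal (\<gamma> R) \<le> Gf a z \<Longrightarrow> 1 \<le> ennreal (1 / \<gamma> R) * Gf a z"
        proof -
          assume "ennreal (\<gamma> R) \<le> Gf a z"
          then have "ennreal (1 / \<gamma> R) * ennreal (\<gamma> R) \<le> ennreal (1 / \<gamma> R) * Gf a z" by (rule mult_left_mono) simp
          moreover have "ennreal (1 / \<gamma> R) * ennreal (\<gamma> R) = 1"
            using \<gamma>_pos[of R] by (simp add: ennreal_mult'[symmetric])
          ultimately show ?thesis by simp
        qed
        ultimately have "\<not> ennreal (\<gamma> R) \<le> Gf a z" by blast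
        then have "Gf a z < ennreal (\<gamma> R)" by (simp add: not_le)
        moreover have "\<gamma> R \<le> \<gamma> (norm z)" using z by (intro \<gamma>_anti) auto
        ultimately have "Gf a z \<le> ennreal (\<gamma> (norm z))" by (meson ennreal_leI less_imp_le order_trans)
        then show ?thesis using False z by (auto simp: \<Omega>_def)
      qed auto
    qed
    have "emeasure lborel (ball (0::complex) R) \<le> emeasure lborel ((\<Omega> \<inter> ball 0 R) \<union> range t \<union> B)"
      using sub by (intro emeasure_mono) (auto intro: Bb)
    also have "\<dots> \<le> emeasure lborel (\<Omega> \<inter> ball 0 R) + emeasure lborel (range t) + emeasure lborel B"
      using Bb by (intro order_trans[OF emeasure_subadditive] add_right_mono emeasure_subadditive) auto
    also have "emeasure lborel (range t) = 0" using range_t_null by auto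
    also have "emeasure lborel B \<le> ennreal (1 / \<gamma> R) * (\<integral>\<^sup>+ z. Gf a z * indicator (ball 0 R) z \<partial>lborel)"
      unfolding B_def by (rule nn_integral_Markov_inequality) measurable
    also have "\<dots> \<le> ennreal (1 / \<gamma> R) * ennreal (R\<^sup>2 * Phi a R)"
      by (intro mult_left_mono Gf_int[OF l2 R]) auto
    also have "\<dots> = ennreal (R\<^sup>2 * Phi a R / \<gamma> R)"
      using \<gamma>_pos[of R] Phi_nonneg[OF l2 R] by (simp add: ennreal_mult'[symmetric])
    also have "\<dots> \<le> ennreal (R\<^sup>2 * sqrt (Phi a R))"
    proof (rule ennreal_leI)
      have P0: "Phi a R \<ge> 0" using Phi_nonneg[OF l2 R] .
      have g: "\<gamma> R \<ge> sqrt (Phi a R)" unfolding \<gamma>_def using R by simp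
      have "Phi a R = sqrt (Phi a R) * sqrt (Phi a R)" using P0 by simp
      also have "\<dots> \<le> sqrt (Phi a R) * \<gamma> R" using g P0 by (intro mult_left_mono) auto
      finally have "Phi a R / \<gamma> R \<le> sqrt (Phi a R)" using \<gamma>_pos[of R] by (simp add: divide_le_eq)
      then show "R\<^sup>2 * Phi a R / \<gamma> R \<le> R\<^sup>2 * sqrt (Phi a R)"
        by (simp add: mult_left_mono times_divide_eq_right[symmetric] del: times_divide_eq_right)
    qed
    finally have ineq: "ennreal (pi * R\<^sup>2) \<le> emeasure lborel (\<Omega> \<inter> ball 0 R) + 0 + ennreal (R\<^sup>2 * sqrt (Phi a R))"
      using R emeasure_ball_complex[of R 0] by simp
    have fin: "emeasure lborel (\<Omega> \<inter> ball 0 R) \<le> ennreal (pi * R\<^sup>2)"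
      using emeasure_mono[of "\<Omega> \<inter> ball 0 R" "ball 0 R" lborel] emeasure_ball_complex[of R 0] R by auto
    then obtain m where m: "emeasure lborel (\<Omega> \<inter> ball 0 R) = ennreal m" "m \<ge> 0"
      by (metis ennreal_cases ennreal_less_top not_le top_unique)
    have "ennreal (m + R\<^sup>2 * sqrt (Phi a R)) = ennreal m + ennreal (R\<^sup>2 * sqrt (Phi a R))"
      using m(2) Phi_nonneg[OF l2 R] by (intro ennreal_plus) auto
    then have "ennreal (pi * R\<^sup>2) \<le> ennreal (m + R\<^sup>2 * sqrt (Phi a R))"
      using ineq m(1) by simp
    then have "pi * R\<^sup>2 \<le> m + R\<^sup>2 * sqrt (Phi a R)"
      using m(2) Phi_nonneg[OF l2 R] by (subst (asm) ennreal_le_iff) auto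
    moreover have "measure lborel (\<Omega> \<inter> ball 0 R) = m" using m by (simp add: measure_def)
    ultimately show ?thesis by linarith
  qed
  have dens: "pos_upper_area_density \<Omega>"
    unfolding pos_upper_area_density_def
  proof
    show "\<Omega> \<in> sets lebesgue" using \<Omega>b by simp
    have ev: "\<forall>\<^sub>F R in at_top. ereal (pi / 2) \<le> ereal (measure lebesgue (\<Omega> \<inter> ball 0 R) / R\<^sup>2)"
    proof -
      have "((\<lambda>R. sqrt (Phi a R)) \<longlongrightarrow> sqrt 0) at_top" by (intro tendsto_real_sqrt Phi_lim[OF l2])
      then have "\<forall>\<^sub>F R in at_top. sqrt (Phi a R) < pi / 2" by (rule order_tendstoD) simp
      then show ?thesis using eventually_ge_at_top[of 1]
      proof eventually_elim
        case (elim R)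
        have "\<Omega> \<inter> ball 0 R \<in> sets borel" by measurable
        then have "measure lebesgue (\<Omega> \<inter> ball 0 R) = measure lborel (\<Omega> \<inter> ball 0 R)" by simp
        moreover have "pi * R\<^sup>2 - R\<^sup>2 * sqrt (Phi a R) \<ge> (pi / 2) * R\<^sup>2"
        proof -
          have "R\<^sup>2 * sqrt (Phi a R) \<le> R\<^sup>2 * (pi / 2)" using elim by (intro mult_left_mono) auto
          then show ?thesis by (simp add: algebra_simps)
        qed
        ultimately have "(pi / 2) * R\<^sup>2 \<le> measure lebesgue (\<Omega> \<inter> ball 0 R)" using main[of R] elim by linarith
        then have "pi / 2 \<le> measure lebesgue (\<Omega> \<inter> ball 0 R) / R\<^sup>2" using elim by (simp add: le_divide_eq)
        then show ?case by simp
      qed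
    qed
    have "ereal (pi / 2) \<le> Limsup at_top (\<lambda>R::real. ereal (measure lebesgue (\<Omega> \<inter> ball 0 R) / R\<^sup>2))"
      by (rule le_Limsup[OF _ ev]) simp
    then show "Limsup at_top (\<lambda>R::real. ereal (measure lebesgue (\<Omega> \<inter> ball 0 R) / R\<^sup>2)) > 0"
      by (rule less_le_trans[rotated]) (simp add: pi_gt_zero)
  qed
  have small: "\<exists>R. \<forall>z\<in>\<Omega>. norm z > R \<longrightarrow> z \<notin> range t \<and> norm (S a z) \<le> \<epsilon>" if e: "\<epsilon> > 0" for \<epsilon>
  proof -
    have "\<forall>\<^sub>F \<rho> in at_top. \<gamma> \<rho> < \<epsilon>" using \<gamma>_lim e by (rule order_tendstoD)
    then obtain R where R: "\<And>\<rho>. \<rho> \<ge> R \<Longrightarrow> \<gamma> \<rho> < \<epsilon>" by (auto simp: eventually_at_top_linorder)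
    have "z \<notin> range t \<and> norm (S a z) \<le> \<epsilon>" if z: "z \<in> \<Omega>" "norm z > R" for z
    proof -
      have zt: "z \<notin> range t" using z by (simp add: \<Omega>_def)
      have "ennreal (norm (S a z)) \<le> Gf a z" by (rule Gf_ge[OF l2 zt])
      also have "\<dots> \<le> ennreal (\<gamma> (norm z))" using z by (simp add: \<Omega>_def)
      finally have "norm (S a z) \<le> \<gamma> (norm z)" using \<gamma>_pos[of "norm z"] by (subst (asm) ennreal_le_iff) auto
      then show ?thesis using R[of "norm z"] z zt by auto
    qed
    then show ?thesis by blast
  qed
  show ?thesis using dens small by blast
qed

end

context cdb
begin

lemma Omega_contra:
  assumes l2: "summable (\<lambda>n. (norm (a n))\<^sup>2)" and \<Omega>: "pos_upper_area_density \<Omega>"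
    and c: "c > 0" and bd: "\<And>z. z \<in> \<Omega> \<Longrightarrow> norm z \<ge> R1 \<Longrightarrow> z \<notin> range t \<Longrightarrow> norm (S a z) \<ge> c"
  shows False
proof -
  have \<Omega>l: "\<Omega> \<in> sets lebesgue" using \<Omega> by (simp add: pos_upper_area_density_def)
  have rt: "range t \<in> sets borel" using range_t_closed by simp
  define R2 where "R2 = max R1 0"
  have rtl: "range t \<in> sets lebesgue" using rt by (auto intro!: sets_completionI_sets)
  have cbl: "cball (0::complex) R2 \<in> sets lebesgue" by (auto intro!: sets_completionI_sets)
  have key: "measure lebesgue (\<Omega> \<inter> ball 0 R) \<le> R\<^sup>2 * Phi a R / c + pi * R2\<^sup>2" if R: "R \<ge> 1" for R
  proof -
    define X where "X = \<Omega> \<inter> ball 0 R - cball 0 R1 - range t"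
    have Xl: "X \<in> sets lebesgue" unfolding X_def using \<Omega>l rt
      by (intro sets.Diff sets.Int) (auto intro!: sets_completionI_sets)
    have "(\<integral>\<^sup>+ (z::complex). ennreal c * indicator X z \<partial>lebesgue) \<le> (\<integral>\<^sup>+ (z::complex). Gf a z * indicator (ball 0 R) z \<partial>lebesgue)"
    proof (rule nn_integral_mono)
      fix z :: complex
      show "ennreal c * indicator X z \<le> Gf a z * indicator (ball 0 R) z"
      proof (cases "z \<in> X")
        case True
        then have z: "z \<in> \<Omega>" "norm z \<ge> R1" "z \<notin> range t" "z \<in> ball 0 R" by (auto simp: X_def)
        have "ennreal c \<le> ennreal (norm (S a z))" using bd[OF z(1-3)] by (rule ennreal_leI)
        also have "\<dots> \<le> Gf a z" by (rule Gf_ge[OF l2 z(3)])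
        finally show ?thesis using True z(4) by simp
      qed simp
    qed
    also have "\<dots> = (\<integral>\<^sup>+ (z::complex). Gf a z * indicator (ball 0 R) z \<partial>lborel)" by (rule nn_integral_completion)
    also have "\<dots> \<le> ennreal (R\<^sup>2 * Phi a R)" by (rule Gf_int[OF l2 R])
    finally have "ennreal c * emeasure lebesgue X \<le> ennreal (R\<^sup>2 * Phi a R)"
      using Xl by (simp add: nn_integral_cmult_indicator)
    moreover have "emeasure lebesgue X \<le> emeasure lebesgue (ball (0::complex) R)"
      using Xl by (intro emeasure_mono) (auto simp: X_def)
    moreover have "emeasure lebesgue (ball (0::complex) R) = ennreal (pi * R\<^sup>2)"
      using R emeasure_ball_complex[of R 0] by simp
    ultimately obtain x where x: "emeasure lebesgue X = ennreal x" "x \<ge> 0" "ennreal c * ennreal x \<le> ennreal (R\<^sup>2 * Phi a R)"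
      by (metis ennreal_cases ennreal_less_top not_le top_unique)
    then have "ennreal (c * x) \<le> ennreal (R\<^sup>2 * Phi a R)" using c by (simp add: ennreal_mult)
    then have "c * x \<le> R\<^sup>2 * Phi a R" using Phi_nonneg[OF l2 R] by (subst (asm) ennreal_le_iff) auto
    then have xb: "x \<le> R\<^sup>2 * Phi a R / c" using c by (simp add: le_divide_eq mult.commute)
    have sub: "\<Omega> \<inter> ball 0 R \<subseteq> X \<union> cball 0 R2 \<union> range t" unfolding X_def R2_def by auto
    have "emeasure lebesgue (\<Omega> \<inter> ball 0 R) \<le> emeasure lebesgue (X \<union> cball 0 R2 \<union> range t)"
      using sub Xl rtl cbl by (intro emeasure_mono sets.Un) auto
    also have "\<dots> \<le> emeasure lebesgue X + emeasure lebesgue (cball (0::complex) R2) + emeasure lebesgue (range t)"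
      using Xl rtl cbl by (intro order_trans[OF emeasure_subadditive] add_right_mono emeasure_subadditive sets.Un) auto
    also have "emeasure lebesgue (range t) = 0" using rt range_t_null by (simp add: null_sets_def)
    also have "emeasure lebesgue (cball (0::complex) R2) = ennreal (pi * R2\<^sup>2)"
      using emeasure_cball_complex[of R2 0] by (simp add: R2_def)
    finally have "emeasure lebesgue (\<Omega> \<inter> ball 0 R) \<le> ennreal (x + pi * R2\<^sup>2)"
      using x(1,2) by (simp add: ennreal_plus)
    then have "measure lebesgue (\<Omega> \<inter> ball 0 R) \<le> x + pi * R2\<^sup>2"
      unfolding measure_def using x(2) by (intro enn2real_leI) auto
    then show ?thesis using xb by linarith
  qed
  have lim: "((\<lambda>R. ereal (Phi a R / c + pi * R2\<^sup>2 / R\<^sup>2)) \<longlongrightarrow> ereal (0 / c + 0)) at_top"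
  proof (intro tendsto_ereal tendsto_add tendsto_divide tendsto_const Phi_lim[OF l2])
    show "((\<lambda>R. pi * R2\<^sup>2 / R\<^sup>2) \<longlongrightarrow> 0) at_top" by real_asymp
  qed (use c in auto)
  have "Limsup at_top (\<lambda>R::real. ereal (measure lebesgue (\<Omega> \<inter> ball 0 R) / R\<^sup>2))
      \<le> Limsup at_top (\<lambda>R. ereal (Phi a R / c + pi * R2\<^sup>2 / R\<^sup>2))"
  proof (rule Limsup_mono)
    show "\<forall>\<^sub>F R in at_top. ereal (measure lebesgue (\<Omega> \<inter> ball 0 R) / R\<^sup>2) \<le> ereal (Phi a R / c + pi * R2\<^sup>2 / R\<^sup>2)"
      using eventually_ge_at_top[of "1::real"]
    proof eventually_elim
      case (elim R)
      have "measure lebesgue (\<Omega> \<inter> ball 0 R) / R\<^sup>2 \<le> (R\<^sup>2 * Phi a R / c + pi * R2\<^sup>2) / R\<^sup>2"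
        using key[OF elim] elim by (intro divide_right_mono) auto
      also have "\<dots> = Phi a R / c + pi * R2\<^sup>2 / R\<^sup>2" using elim by (simp add: field_simps)
      finally show ?case by simp
    qed
  qed
  also have "\<dots> = ereal (0 / c + 0)" by (rule lim_imp_Limsup[OF _ lim]) simp
  finally show False using \<Omega> by (auto simp: pos_upper_area_density_def zero_ereal_def[symmetric])
qed

end

lemma poly_from_circles:
  fixes G :: "complex \<Rightarrow> complex"
  assumes G: "G holomorphic_on UNIV" and B: "B \<ge> 0"
    and circ: "\<And>R. \<exists>r\<ge>R. r > 0 \<and> (\<forall>z. norm z = r \<longrightarrow> norm (G z) \<le> B * r ^ n)"
  shows "G \<xi> = (\<Sum>k\<le>n. (deriv ^^ k) G 0 / fact k * \<xi> ^ k)"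
proof -
  have z: "(deriv ^^ k) G 0 = 0" if k: "k > n" for k
  proof (rule ccontr)
    assume ne: "(deriv ^^ k) G 0 \<noteq> 0"
    define d where "d = norm ((deriv ^^ k) G 0)"
    have d: "d > 0" using ne by (simp add: d_def)
    obtain r where r: "r \<ge> max 1 (fact k * B / d + 1)" "r > 0" "\<And>z. norm z = r \<Longrightarrow> norm (G z) \<le> B * r ^ n"
      using circ by blast
    have "d \<le> fact k * (B * r ^ n) / r ^ k"
      unfolding d_def
    proof (rule Cauchy_inequality)
      show "G holomorphic_on ball 0 r" using G by (rule holomorphic_on_subset) auto
      show "continuous_on (cball 0 r) G" using G holomorphic_on_imp_continuous_on continuous_on_subset by blast
      show "norm (G x) \<le> B * r ^ n" if "norm (0 - x) = r" for x using r(3)[of x] that by simp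
    qed (use r in auto)
    also have "\<dots> \<le> fact k * B / r"
    proof -
      have r1: "r \<ge> 1" using r by simp
      have "r ^ (n + 1) \<le> r ^ k" using r1 k by (intro power_increasing) auto
      then have "r * r ^ n \<le> r ^ k" by simp
      moreover have "fact k * B \<ge> 0" using B by simp
      ultimately have "fact k * B * (r * r ^ n) \<le> fact k * B * r ^ k" by (intro mult_left_mono)
      then show ?thesis using r1 by (simp add: field_simps)
    qed
    also have "\<dots> < d"
    proof -
      have "fact k * B / d < r" using r by simp
      then show ?thesis using d r by (simp add: divide_less_eq mult.commute)
    qed
    finally show False by simp
  qed
  have "(\<lambda>k. (deriv ^^ k) G 0 / fact k * (\<xi> - 0) ^ k) sums G \<xi>"
    by (rule holomorphic_power_series[where r = "norm \<xi> + 1"]) (use G in \<open>auto intro: holomorphic_on_subset\<close>)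
  moreover have "(\<lambda>k. (deriv ^^ k) G 0 / fact k * (\<xi> - 0) ^ k) sums (\<Sum>k\<le>n. (deriv ^^ k) G 0 / fact k * (\<xi> - 0) ^ k)"
    by (rule sums_finite) (auto simp: z not_le)
  ultimately show ?thesis by (simp add: sums_unique2)
qed

lemma poly_lower:
  fixes c :: "nat \<Rightarrow> complex"
  assumes "c j \<noteq> 0" "j \<le> n"
  shows "\<exists>\<delta>>0. \<exists>R. \<forall>z. norm z \<ge> R \<longrightarrow> norm (\<Sum>k\<le>n. c k * z ^ k) \<ge> \<delta>"
proof -
  define p where "p = (\<Sum>k\<le>n. monom (c k) k)"
  have pz: "poly p z = (\<Sum>k\<le>n. c k * z ^ k)" for z unfolding p_def by (simp add: poly_sum poly_monom)
  have "coeff p j = c j" unfolding p_def using assms by (simp add: coeff_sum)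
  then have p0: "p \<noteq> 0" using assms by auto
  obtain a q where pq: "p = pCons a q" by (cases p)
  show ?thesis
  proof (cases "q = 0")
    case True
    then have "a \<noteq> 0" using p0 pq by auto
    moreover have "poly p z = a" for z using pq True by simp
    ultimately show ?thesis using pz by (intro exI[of _ "norm a"]) auto
  next
    case False
    obtain R where "\<forall>z. R \<le> norm z \<longrightarrow> 1 \<le> norm (poly (pCons a q) z)"
      using poly_infinity[OF False, of 1 a] by blast
    then show ?thesis using pz pq by (intro exI[of _ 1]) auto
  qed
qed

context cdb
begin

lemma divide_A:
  assumes F: "F holomorphic_on UNIV" and Fz: "\<And>n. F (t n) = 0"
  defines "Gd \<equiv> (\<lambda>z. if A z = 0 then deriv F z / deriv A z else F z / A z)"
  shows "Gd holomorphic_on UNIV"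
proof (rule hol_local)
  fix z
  show "\<exists>U. open U \<and> z \<in> U \<and> Gd holomorphic_on U"
  proof (cases "z \<in> range t")
    case False
    have op: "open (- range t)" using S_props(1)[where a="\<lambda>_. 0" and J=UNIV] by simp
    have "(\<lambda>z. F z / A z) holomorphic_on (- range t)"
      using F A_hol A_zero_iff by (intro holomorphic_intros) (auto intro: holomorphic_on_subset)
    then have "Gd holomorphic_on (- range t)"
      by (rule holomorphic_transform) (auto simp: Gd_def A_zero_iff)
    then show ?thesis using op False by blast
  next
    case True
    then obtain m where m: "z = t m" by blast
    define qF where "qF = (\<lambda>y. if y = t m then deriv F (t m) else (F y - F (t m)) / (y - t m))"
    define qA where "qA = (\<lambda>y. if y = t m then deriv A (t m) else (A y - A (t m)) / (y - t m))"
    have hF: "qF holomorphic_on UNIV" unfolding qF_def by (rule pole_lemma_open[OF F]) auto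
    have hA: "qA holomorphic_on UNIV" unfolding qA_def by (rule pole_lemma_open[OF A_hol]) auto
    define U where "U = - (t ` (- {m})) \<inter> (UNIV \<inter> qA -` (- {0}))"
    have opU: "open U" unfolding U_def
    proof (rule open_Int)
      show "open (- t ` (- {m}))" using S_props(1)[where a="\<lambda>_. 0" and J="- {m}"] by simp
      show "open (UNIV \<inter> qA -` (- {0}))"
        using hA by (intro continuous_open_preimage holomorphic_on_imp_continuous_on) auto
    qed
    have zU: "z \<in> U" using inj_t dA_nz[of m] by (auto simp: U_def m qA_def inj_eq)
    have "(\<lambda>y. qF y / qA y) holomorphic_on U"
      using hF hA by (intro holomorphic_intros) (auto simp: U_def intro: holomorphic_on_subset)
    moreover have "qF y / qA y = Gd y" if y: "y \<in> U" for y
    proof (cases "y = t m")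
      case True
      then show ?thesis by (simp add: qF_def qA_def Gd_def A_t)
    next
      case False
      then have "y \<notin> range t" using y by (auto simp: U_def)
      then have Ay: "A y \<noteq> 0" using A_zero_iff by auto
      have "qF y / qA y = (F y / (y - t m)) / (A y / (y - t m))"
        using False by (simp add: qF_def qA_def Fz A_t)
      also have "\<dots> = F y / A y"
      proof -
        have d: "y - t m \<noteq> 0" using False by simp
        show ?thesis using d Ay by (simp add: divide_divide_eq_left divide_divide_eq_right)
      qed
      finally show ?thesis using Ay by (simp add: Gd_def)
    qed
    ultimately have "Gd holomorphic_on U" by (rule holomorphic_transform)
    then show ?thesis using opU zU by blast
  qed
qed

end

lemma zld_gap:
  assumes E1: "zero_linear_density E1" and E2: "zero_linear_density E2"
  shows "\<exists>r>R0. r \<notin> E1 \<and> r \<notin> E2"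
proof (rule ccontr)
  assume H: "\<not> (\<exists>r>R0. r \<notin> E1 \<and> r \<notin> E2)"
  have l1: "E1 \<in> sets lebesgue" "((\<lambda>R. measure lebesgue (E1 \<inter> {0<..<R}) / R) \<longlongrightarrow> 0) at_top"
    using E1 by (auto simp: zero_linear_density_def)
  have l2: "E2 \<in> sets lebesgue" "((\<lambda>R. measure lebesgue (E2 \<inter> {0<..<R}) / R) \<longlongrightarrow> 0) at_top"
    using E2 by (auto simp: zero_linear_density_def)
  have "\<forall>\<^sub>F R in at_top. measure lebesgue (E1 \<inter> {0<..<R}) / R < 1/4"
    using l1(2) by (rule order_tendstoD) simp
  moreover have "\<forall>\<^sub>F R in at_top. measure lebesgue (E2 \<inter> {0<..<R}) / R < 1/4"
    using l2(2) by (rule order_tendstoD) simp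
  ultimately have "\<forall>\<^sub>F R in at_top. measure lebesgue (E1 \<inter> {0<..<R}) / R < 1/4 \<and> measure lebesgue (E2 \<inter> {0<..<R}) / R < 1/4"
    by (rule eventually_conj)
  then obtain M where M: "\<And>x. x \<ge> M \<Longrightarrow> measure lebesgue (E1 \<inter> {0<..<x}) / x < 1/4 \<and> measure lebesgue (E2 \<inter> {0<..<x}) / x < 1/4"
    by (auto simp: eventually_at_top_linorder)
  define R where "R = max (max M 1) (max R0 0)"
  have R: "R \<ge> 1" "2 * R \<ge> M" "R \<ge> R0" unfolding R_def by auto
  have m: "measure lebesgue (E1 \<inter> {0<..<2*R}) < R / 2" "measure lebesgue (E2 \<inter> {0<..<2*R}) < R / 2"
    using M[of "2*R"] R by (auto simp: divide_less_eq)
  have sub: "{R<..<2*R} \<subseteq> (E1 \<inter> {0<..<2*R}) \<union> (E2 \<inter> {0<..<2*R})"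
  proof
    fix r assume r: "r \<in> {R<..<2*R}"
    then have "r > R0" "r > 0" using R by auto
    then have "r \<in> E1 \<or> r \<in> E2" using H by blast
    then show "r \<in> (E1 \<inter> {0<..<2*R}) \<union> (E2 \<inter> {0<..<2*R})" using r \<open>r > 0\<close> by auto
  qed
  have s1: "E1 \<inter> {0<..<2*R} \<in> sets lebesgue" using l1(1) by auto
  have s2: "E2 \<inter> {0<..<2*R} \<in> sets lebesgue" using l2(1) by auto
  have f1: "emeasure lebesgue (E1 \<inter> {0<..<2*R}) \<noteq> top"
  proof -
    have "emeasure lebesgue (E1 \<inter> {0<..<2*R}) \<le> emeasure lebesgue {0<..<2*R}"
      using s1 by (intro emeasure_mono) auto
    also have "\<dots> = ennreal (2*R)" using R by simp
    finally have "emeasure lebesgue (E1 \<inter> {0<..<2*R}) < top" using ennreal_less_top[of "2*R"] by (rule le_less_trans)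
    then show ?thesis by simp
  qed
  have f2: "emeasure lebesgue (E2 \<inter> {0<..<2*R}) \<noteq> top"
  proof -
    have "emeasure lebesgue (E2 \<inter> {0<..<2*R}) \<le> emeasure lebesgue {0<..<2*R}"
      using s2 by (intro emeasure_mono) auto
    also have "\<dots> = ennreal (2*R)" using R by simp
    finally have "emeasure lebesgue (E2 \<inter> {0<..<2*R}) < top" using ennreal_less_top[of "2*R"] by (rule le_less_trans)
    then show ?thesis by simp
  qed
  have "ennreal R = emeasure lebesgue {R<..<2*R}" using R by simp
  also have "\<dots> \<le> emeasure lebesgue ((E1 \<inter> {0<..<2*R}) \<union> (E2 \<inter> {0<..<2*R}))"
    using sub s1 s2 by (intro emeasure_mono) auto
  also have "\<dots> \<le> emeasure lebesgue (E1 \<inter> {0<..<2*R}) + emeasure lebesgue (E2 \<inter> {0<..<2*R})"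
    using s1 s2 by (rule emeasure_subadditive)
  also have "\<dots> = ennreal (measure lebesgue (E1 \<inter> {0<..<2*R}) + measure lebesgue (E2 \<inter> {0<..<2*R}))"
    using f1 f2 by (simp add: emeasure_eq_ennreal_measure ennreal_plus)
  finally have "R \<le> measure lebesgue (E1 \<inter> {0<..<2*R}) + measure lebesgue (E2 \<inter> {0<..<2*R})"
    by (subst (asm) ennreal_le_iff) auto
  then show False using m by linarith
qed

context cdb
begin

lemma norm_id:
  assumes "f (t n) = deriv A (t n) * a n * complex_of_real (sqrt (\<mu> n))"
  shows "(norm (f (t n)))\<^sup>2 / ((norm (deriv A (t n)))\<^sup>2 * \<mu> n) = (norm (a n))\<^sup>2"
proof -
  have "(norm (f (t n)))\<^sup>2 = (norm (deriv A (t n)))\<^sup>2 * (norm (a n))\<^sup>2 * \<mu> n"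
    using assms mu_pos[of n] by (simp add: norm_mult power_mult_distrib)
  then show ?thesis using dA_nz[of n] mu_pos[of n] by simp
qed

end

theorem theorem2p6:
  fixes t :: "nat \<Rightarrow> complex" and A f :: "complex \<Rightarrow> complex" and \<mu> :: "nat \<Rightarrow> real"
  assumes "cdb_data t A \<mu>" and "finite_order A" and "f holomorphic_on UNIV"
  shows "(f \<in> cdb_space t A \<mu> \<longleftrightarrow>
           summable (\<lambda>n. (norm (f (t n)))\<^sup>2 / ((norm (deriv A (t n)))\<^sup>2 * \<mu> n)) \<and>
           (\<exists>E N R0. E \<subseteq> {0<..} \<and> zero_linear_density E \<and> N > 0 \<and>
              (\<forall>z. norm z > R0 \<and> norm z \<notin> E \<longrightarrow> norm (f z) \<le> norm z powr N * norm (A z))) \<and>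
           (\<exists>\<Omega>. pos_upper_area_density \<Omega> \<and>
              (\<forall>\<epsilon>>0. \<exists>R. \<forall>z\<in>\<Omega>. norm z > R \<longrightarrow> norm (f z) \<le> \<epsilon> * norm (A z))))
         \<and> (\<forall>a. f \<in> cdb_space t A \<mu> \<and> cdb_repr t A \<mu> a f \<longrightarrow>
              (\<Sum>n. (norm (a n))\<^sup>2) = (\<Sum>n. (norm (f (t n)))\<^sup>2 / ((norm (deriv A (t n)))\<^sup>2 * \<mu> n)))"
proof -
  interpret cdb t A \<mu> by unfold_locales (rule assms(1))
  have fo: "finite_order A" by (rule assms(2))
  have fh: "f holomorphic_on UNIV" by (rule assms(3))
  have repr_facts: "summable (\<lambda>n. (norm (a n))\<^sup>2) \<and> (\<forall>n. f (t n) = deriv A (t n) * a n * complex_of_real (sqrt (\<mu> n)))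
      \<and> (\<forall>z. z \<notin> range t \<longrightarrow> f z = A z * S a z)"
    if r: "cdb_repr t A \<mu> a f" for a
  proof -
    have l2: "summable (\<lambda>n. (norm (a n))\<^sup>2)" using r by (simp add: cdb_repr_def)
    have fH: "f = Hf a" by (rule repr_eq_Hf[OF fh r])
    have "f (t n) = deriv A (t n) * a n * complex_of_real (sqrt (\<mu> n))" for n
      using fH Hf_t by simp
    moreover have "f z = A z * S a z" if "z \<notin> range t" for z
      using r that by (simp add: cdb_repr_def S_def trm_def)
    ultimately show ?thesis using l2 by blast
  qed
  have fwd: "summable (\<lambda>n. (norm (f (t n)))\<^sup>2 / ((norm (deriv A (t n)))\<^sup>2 * \<mu> n)) \<and>
           (\<exists>E N R0. E \<subseteq> {0<..} \<and> zero_linear_density E \<and> N > 0 \<and>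
              (\<forall>z. norm z > R0 \<and> norm z \<notin> E \<longrightarrow> norm (f z) \<le> norm z powr N * norm (A z))) \<and>
           (\<exists>\<Omega>. pos_upper_area_density \<Omega> \<and>
              (\<forall>\<epsilon>>0. \<exists>R. \<forall>z\<in>\<Omega>. norm z > R \<longrightarrow> norm (f z) \<le> \<epsilon> * norm (A z)))"
    if fin: "f \<in> cdb_space t A \<mu>"
  proof -
    obtain a where r: "cdb_repr t A \<mu> a f" using fin by (auto simp: cdb_space_def)
    have l2: "summable (\<lambda>n. (norm (a n))\<^sup>2)" and ft: "\<And>n. f (t n) = deriv A (t n) * a n * complex_of_real (sqrt (\<mu> n))"
      and fA: "\<And>z. z \<notin> range t \<Longrightarrow> f z = A z * S a z"
      using repr_facts[OF r] by auto
    have i: "summable (\<lambda>n. (norm (f (t n)))\<^sup>2 / ((norm (deriv A (t n)))\<^sup>2 * \<mu> n))"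
      using l2 by (simp add: norm_id[where f=f and a=a, OF ft])
    obtain E N R0 where E: "E \<subseteq> {0<..}" "zero_linear_density E" "N > 0"
      "\<And>z. norm z > R0 \<Longrightarrow> norm z \<notin> E \<Longrightarrow> z \<notin> range t \<and> norm (S a z) \<le> norm z powr N"
      using S_growth[OF fo l2] by blast
    have ii: "\<exists>E N R0. E \<subseteq> {0<..} \<and> zero_linear_density E \<and> N > 0 \<and>
              (\<forall>z. norm z > R0 \<and> norm z \<notin> E \<longrightarrow> norm (f z) \<le> norm z powr N * norm (A z))"
    proof (rule exI[of _ E], rule exI[of _ N], rule exI[of _ R0], intro conjI allI impI)
      fix z :: complex assume z: "norm z > R0 \<and> norm z \<notin> E"
      then have zt: "z \<notin> range t" and Sb: "norm (S a z) \<le> norm z powr N" using E(4) by auto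
      have "norm (f z) = norm (A z) * norm (S a z)" using fA[OF zt] by (simp add: norm_mult)
      also have "\<dots> \<le> norm (A z) * norm z powr N" using Sb by (intro mult_left_mono) auto
      finally show "norm (f z) \<le> norm z powr N * norm (A z)" by (simp add: mult.commute)
    qed (use E in auto)
    obtain \<Omega> where \<Omega>: "pos_upper_area_density \<Omega>"
      "\<And>\<epsilon>. \<epsilon> > 0 \<Longrightarrow> \<exists>R. \<forall>z\<in>\<Omega>. norm z > R \<longrightarrow> z \<notin> range t \<and> norm (S a z) \<le> \<epsilon>"
      using Omega_forward[OF l2] by blast
    have iii: "\<exists>\<Omega>. pos_upper_area_density \<Omega> \<and>
              (\<forall>\<epsilon>>0. \<exists>R. \<forall>z\<in>\<Omega>. norm z > R \<longrightarrow> norm (f z) \<le> \<epsilon> * norm (A z))"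
    proof (rule exI[of _ \<Omega>], intro conjI allI impI)
      fix \<epsilon> :: real assume e: "\<epsilon> > 0"
      obtain R where R: "\<And>z. z \<in> \<Omega> \<Longrightarrow> norm z > R \<Longrightarrow> z \<notin> range t \<and> norm (S a z) \<le> \<epsilon>"
        using \<Omega>(2)[OF e] by blast
      have "norm (f z) \<le> \<epsilon> * norm (A z)" if "z \<in> \<Omega>" "norm z > R" for z
      proof -
        have zt: "z \<notin> range t" and Sb: "norm (S a z) \<le> \<epsilon>" using R that by auto
        have "norm (f z) = norm (A z) * norm (S a z)" using fA[OF zt] by (simp add: norm_mult)
        also have "\<dots> \<le> norm (A z) * \<epsilon>" using Sb by (intro mult_left_mono) auto
        finally show ?thesis by (simp add: mult.commute)
      qed
      then show "\<exists>R. \<forall>z\<in>\<Omega>. norm z > R \<longrightarrow> norm (f z) \<le> \<epsilon> * norm (A z)" by blast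
    qed (rule \<Omega>(1))
    show ?thesis using i ii iii by blast
  qed
  have bwd: "f \<in> cdb_space t A \<mu>"
    if H1: "summable (\<lambda>n. (norm (f (t n)))\<^sup>2 / ((norm (deriv A (t n)))\<^sup>2 * \<mu> n))"
    and H2: "\<exists>E N R0. E \<subseteq> {0<..} \<and> zero_linear_density E \<and> N > 0 \<and>
              (\<forall>z. norm z > R0 \<and> norm z \<notin> E \<longrightarrow> norm (f z) \<le> norm z powr N * norm (A z))"
    and H3: "\<exists>\<Omega>. pos_upper_area_density \<Omega> \<and>
              (\<forall>\<epsilon>>0. \<exists>R. \<forall>z\<in>\<Omega>. norm z > R \<longrightarrow> norm (f z) \<le> \<epsilon> * norm (A z))"
  proof -
    define a where "a n = f (t n) / (deriv A (t n) * complex_of_real (sqrt (\<mu> n)))" for n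
    have ft: "f (t n) = deriv A (t n) * a n * complex_of_real (sqrt (\<mu> n))" for n
      unfolding a_def using dA_nz[of n] mu_pos[of n] by simp
    have l2: "summable (\<lambda>n. (norm (a n))\<^sup>2)" using H1 by (simp add: norm_id[where f=f and a=a, OF ft])
    define F where "F z = f z - Hf a z" for z
    have Fh: "F holomorphic_on UNIV" unfolding F_def[abs_def] using fh Hf_hol[OF l2] by (intro holomorphic_intros)
    have Ft: "F (t n) = 0" for n unfolding F_def by (simp add: Hf_t ft)
    define Gd where "Gd = (\<lambda>z. if A z = 0 then deriv F z / deriv A z else F z / A z)"
    have Gh: "Gd holomorphic_on UNIV" unfolding Gd_def by (rule divide_A[OF Fh Ft])
    have GdS: "Gd z = f z / A z - S a z" if z: "z \<notin> range t" for z
    proof -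
      have Az: "A z \<noteq> 0" using z A_zero_iff by auto
      then have "Gd z = (f z - A z * S a z) / A z" by (simp add: Gd_def F_def Hf_out[OF z])
      also have "\<dots> = f z / A z - S a z" using Az by (simp add: field_simps)
      finally show ?thesis .
    qed
    obtain E1 N1 R1 where E1: "zero_linear_density E1"
      "\<And>z. norm z > R1 \<Longrightarrow> norm z \<notin> E1 \<Longrightarrow> norm (f z) \<le> norm z powr N1 * norm (A z)"
      using H2 by blast
    obtain E2 N2 R2 where E2: "zero_linear_density E2"
      "\<And>z. norm z > R2 \<Longrightarrow> norm z \<notin> E2 \<Longrightarrow> z \<notin> range t \<and> norm (S a z) \<le> norm z powr N2"
      using S_growth[OF fo l2] by blast
    define n where "n = nat \<lceil>max N1 N2\<rceil>"
    have circ: "\<exists>r\<ge>R. r > 0 \<and> (\<forall>z. norm z = r \<longrightarrow> norm (Gd z) \<le> 2 * r ^ n)" for R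
    proof -
      obtain r where r: "r > max R (max R1 (max R2 1))" "r \<notin> E1" "r \<notin> E2"
        using zld_gap[OF E1(1) E2(1)] by blast
      have r1: "r > 1" using r by simp
      have pw: "r powr N \<le> r ^ n" if "N \<le> max N1 N2" for N
      proof -
        have "r powr N \<le> r powr (real n)" using r1 that unfolding n_def by (intro powr_mono) (auto, linarith)
        also have "\<dots> = r ^ n" using r1 by (simp add: powr_realpow)
        finally show ?thesis .
      qed
      have "norm (Gd z) \<le> 2 * r ^ n" if z: "norm z = r" for z
      proof -
        have zt: "z \<notin> range t" and Sb: "norm (S a z) \<le> r powr N2" using E2(2)[of z] z r by auto
        have Az: "A z \<noteq> 0" using zt A_zero_iff by auto
        have "norm (f z) \<le> r powr N1 * norm (A z)" using E1(2)[of z] z r by auto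
        then have fb: "norm (f z / A z) \<le> r powr N1" using Az by (simp add: norm_divide divide_le_eq)
        have "norm (Gd z) \<le> norm (f z / A z) + norm (S a z)" unfolding GdS[OF zt] by (rule norm_triangle_ineq4)
        also have "\<dots> \<le> r ^ n + r ^ n" using fb Sb pw[of N1] pw[of N2] by auto
        finally show ?thesis by simp
      qed
      then show ?thesis using r by (intro exI[of _ r]) auto
    qed
    define c where "c k = (deriv ^^ k) Gd 0 / fact k" for k
    have Gpoly: "Gd \<xi> = (\<Sum>k\<le>n. c k * \<xi> ^ k)" for \<xi>
      unfolding c_def by (rule poly_from_circles[OF Gh _ circ]) simp
    have allz: "c k = 0" if kn: "k \<le> n" for k
    proof (rule ccontr)
      assume ck: "c k \<noteq> 0"
      obtain \<delta> Rp where \<delta>: "\<delta> > 0" "\<And>z. norm z \<ge> Rp \<Longrightarrow> norm (\<Sum>k\<le>n. c k * z ^ k) \<ge> \<delta>"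
        using poly_lower[where c=c and j=k and n=n, OF ck kn] by blast
      obtain \<Omega> where \<Omega>: "pos_upper_area_density \<Omega>"
        "\<And>\<epsilon>. \<epsilon> > 0 \<Longrightarrow> \<exists>R. \<forall>z\<in>\<Omega>. norm z > R \<longrightarrow> norm (f z) \<le> \<epsilon> * norm (A z)"
        using H3 by blast
      obtain Re where Re: "\<And>z. z \<in> \<Omega> \<Longrightarrow> norm z > Re \<Longrightarrow> norm (f z) \<le> \<delta>/2 * norm (A z)"
        using \<Omega>(2)[of "\<delta>/2"] \<delta> by auto
      show False
      proof (rule Omega_contra[OF l2 \<Omega>(1), of "\<delta>/2" "max Rp (Re + 1)"])
        show "0 < \<delta>/2" using \<delta> by simp
        fix z :: complex assume z: "z \<in> \<Omega>" "max Rp (Re + 1) \<le> norm z" "z \<notin> range t"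
        have Az: "A z \<noteq> 0" using z A_zero_iff by auto
        have "norm (f z) \<le> \<delta>/2 * norm (A z)" using Re[of z] z by auto
        then have fb: "norm (f z / A z) \<le> \<delta>/2" using Az by (simp add: norm_divide divide_le_eq)
        have Gb: "norm (Gd z) \<ge> \<delta>" unfolding Gpoly using \<delta>(2)[of z] z by auto
        have "S a z = f z / A z - Gd z" using GdS[OF z(3)] by simp
        then have "norm (Gd z) \<le> norm (f z / A z) + norm (S a z)"
          using norm_triangle_ineq4[of "f z / A z" "S a z"] by (simp add: norm_minus_commute)
        then show "\<delta>/2 \<le> norm (S a z)" using fb Gb by linarith
      qed
    qed
    have G0: "Gd z = 0" for z unfolding Gpoly using allz by simp
    have "cdb_repr t A \<mu> a f"
      unfolding cdb_repr_def
    proof (intro conjI allI impI)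
      show "summable (\<lambda>n. (norm (a n))\<^sup>2)" by (rule l2)
      fix z :: complex assume z: "z \<notin> range t"
      show "summable (\<lambda>n. a n * complex_of_real (sqrt (\<mu> n)) / (z - t n))"
        using S_props(3)[where J=UNIV, OF l2, of z] z by (simp add: trm_def)
      have Az: "A z \<noteq> 0" using z A_zero_iff by auto
      have "f z / A z = S a z" using GdS[OF z] G0[of z] by simp
      then have "f z = A z * S a z" using Az by (simp add: field_simps)
      then show "f z = A z * (\<Sum>n. a n * complex_of_real (sqrt (\<mu> n)) / (z - t n))"
        by (simp add: S_def trm_def)
    qed
    then show ?thesis using fh by (auto simp: cdb_space_def)
  qed
  have nrm: "(\<Sum>n. (norm (a n))\<^sup>2) = (\<Sum>n. (norm (f (t n)))\<^sup>2 / ((norm (deriv A (t n)))\<^sup>2 * \<mu> n))"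
    if "f \<in> cdb_space t A \<mu> \<and> cdb_repr t A \<mu> a f" for a
  proof -
    have ft: "\<And>n. f (t n) = deriv A (t n) * a n * complex_of_real (sqrt (\<mu> n))"
      using repr_facts[of a] that by auto
    show ?thesis by (simp add: norm_id[where f=f and a=a, OF ft])
  qed
  show ?thesis using fwd bwd nrm by blast
qed

end
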